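(* Fix $\beta>0$ and $a>0$, and set $a(t):=a+\beta t/4$. For any $0<t_0<t_1$, any $0<d<D<\sqrt{a(t_0)}$ and any $x\in[\sqrt{a(t_0)}-d,\sqrt{a(t_0)}+d]$, $$\mathbb{P}\Big(\exists t\in[t_0,t_1]: Z_a(t)\notin\big[\sqrt{a(t_0)}-D,\sqrt{a(t)}+D\big]\ \Big|\ Z_a(t_0)=x\Big)\le 4e^{-\frac{(D-d)^2}{2(t_1-t_0)}},$$ where $Z_a$ solves $dZ_a(t)=(a(t)-Z_a(t)^2)dt+dB(t)$ for $t\ge t_0$ with $B$ a standard Brownian motion. *)

theory Defs
  imports "HOL-Probability.Probability"
begin

definition brownian_motion :: "'w measure \<Rightarrow> (real \<Rightarrow> 'w \<Rightarrow> real) \<Rightarrow> bool" where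
  "brownian_motion M B \<longleftrightarrow>
     prob_space M \<and>
     (\<forall>t\<ge>0. B t \<in> borel_measurable M) \<and>
     (\<forall>\<omega>\<in>space M. B 0 \<omega> = 0 \<and> continuous_on {0..} (\<lambda>t. B t \<omega>)) \<and>
     (\<forall>s t. 0 \<le> s \<longrightarrow> s < t \<longrightarrow>
        distributed M lborel (\<lambda>\<omega>. B t \<omega> - B s \<omega>) (\<lambda>y. ennreal (normal_density 0 (sqrt (t - s)) y))) \<and>
     (\<forall>(n::nat) (ts::nat \<Rightarrow> real). 0 \<le> ts 0 \<longrightarrow> (\<forall>i<n. ts i < ts (Suc i)) \<longrightarrow>
        prob_space.indep_vars M (\<lambda>_. borel) (\<lambda>i \<omega>. B (ts (Suc i)) \<omega> - B (ts i) \<omega>) {..<n})"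

definition solves_on :: "(real \<Rightarrow> real) \<Rightarrow> (real \<Rightarrow> 'w \<Rightarrow> real) \<Rightarrow> 'w \<Rightarrow> real \<Rightarrow> real \<Rightarrow> real
    \<Rightarrow> (real \<Rightarrow> real) \<Rightarrow> bool" where
  "solves_on a B \<omega> t0 t1 x z \<longleftrightarrow>
     continuous_on {t0..t1} z \<and>
     (\<forall>t\<in>{t0..t1}. z t = x + integral {t0..t} (\<lambda>s. a s - (z s)\<^sup>2) + (B t \<omega> - B t0 \<omega>))"

end

theory Submission
  imports Defs
begin


definition clampr :: "real \<Rightarrow> real \<Rightarrow> real \<Rightarrow> real" where
  "clampr L U z = max L (min U z)"

lemma clamp_range: "L \<le> U \<Longrightarrow> L \<le> clampr L U z \<and> clampr L U z \<le> U"
  by (auto simp: clampr_def)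

lemma clamp_lip: "L \<le> U \<Longrightarrow> \<bar>clampr L U z - clampr L U w\<bar> \<le> \<bar>z - w\<bar>"
  by (auto simp: clampr_def)

lemma clamp_sq_lip:
  assumes "0 \<le> L" "L \<le> U"
  shows "\<bar>(clampr L U z)\<^sup>2 - (clampr L U w)\<^sup>2\<bar> \<le> 2 * U * \<bar>z - w\<bar>"
proof -
  let ?c = "clampr L U z" and ?d = "clampr L U w"
  have r: "L \<le> ?c" "?c \<le> U" "L \<le> ?d" "?d \<le> U" using clamp_range[OF assms(2)] by auto
  have e: "?c\<^sup>2 - ?d\<^sup>2 = (?c - ?d) * (?c + ?d)" by algebra
  have "\<bar>?c\<^sup>2 - ?d\<^sup>2\<bar> = \<bar>?c - ?d\<bar> * (?c + ?d)"
    unfolding e abs_mult using r assms by simp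
  also have "\<dots> \<le> \<bar>z - w\<bar> * (2 * U)"
    using r assms clamp_lip[OF assms(2), of z w] by (intro mult_mono) auto
  finally show ?thesis by (simp add: mult.commute)
qed

lemma has_integral_pow_shift:
  assumes "t0 \<le> t"
  shows "((\<lambda>s. (s - t0)^n) has_integral (t - t0)^(Suc n) / Suc n) {t0..t}"
proof -
  have "((\<lambda>s. (s - t0)^n) has_integral ((\<lambda>s. (s - t0)^(Suc n) / Suc n) t - (\<lambda>s. (s - t0)^(Suc n) / Suc n) t0)) {t0..t}"
    apply (rule fundamental_theorem_of_calculus[OF assms])
    apply (auto intro!: derivative_eq_intros simp: has_real_derivative_iff_has_vector_derivative[symmetric])
    apply (cases n) apply (auto simp: field_simps)
    done
  then show ?thesis by simp
qed


locale picard =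
  fixes a b :: "real \<Rightarrow> real" and t0 t1 x L U :: real
  assumes t01: "t0 < t1" and L0: "0 \<le> L" and LU: "L \<le> U"
    and ca: "continuous_on {t0..t1} a" and cb: "continuous_on {t0..t1} b"
begin

definition F where "F s z = a s - (clampr L U z)\<^sup>2"
definition K where "K = 2 * U"
definition Phi where "Phi z t = x + integral {t0..t} (\<lambda>s. F s (z s)) + b t"
definition pic where "pic n = (Phi ^^ n) (\<lambda>_. x)"
definition Zs where "Zs t = x + suminf (\<lambda>i. pic (Suc i) t - pic i t)"

lemma K0: "0 \<le> K" using L0 LU by (simp add: K_def)

lemma F_lip: "\<bar>F s z - F s w\<bar> \<le> K * \<bar>z - w\<bar>"
  using clamp_sq_lip[OF L0 LU, of z w] by (simp add: F_def K_def abs_minus_commute)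

lemma F_cont:
  assumes "continuous_on {t0..t1} z"
  shows "continuous_on {t0..t1} (\<lambda>s. F s (z s))"
  unfolding F_def clampr_def using assms ca
  by (intro continuous_intros) auto

lemma F_int:
  assumes "continuous_on {t0..t1} z" "t \<le> t1"
  shows "(\<lambda>s. F s (z s)) integrable_on {t0..t}"
  by (rule integrable_continuous_interval, rule continuous_on_subset[OF F_cont[OF assms(1)]])
     (use assms in auto)

lemma Phi_cont:
  assumes "continuous_on {t0..t1} z"
  shows "continuous_on {t0..t1} (Phi z)"
proof -
  have "continuous_on {t0..t1} (\<lambda>t. integral {t0..t} (\<lambda>s. F s (z s)))"
    by (rule indefinite_integral_continuous_1, rule F_int[OF assms]) simp
  then show ?thesis unfolding Phi_def using cb by (intro continuous_intros) auto
qed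

lemma Phi_diff_bound:
  assumes cz: "continuous_on {t0..t1} z" and cw: "continuous_on {t0..t1} w"
    and hb: "\<And>s. s \<in> {t0..t1} \<Longrightarrow> \<bar>z s - w s\<bar> \<le> C * (K*(s-t0))^n / fact n"
    and t: "t \<in> {t0..t1}"
  shows "\<bar>Phi z t - Phi w t\<bar> \<le> C * (K*(t-t0))^(Suc n) / fact (Suc n)"
proof -
  have iz: "(\<lambda>s. F s (z s)) integrable_on {t0..t}" using F_int[OF cz] t by auto
  have iw: "(\<lambda>s. F s (w s)) integrable_on {t0..t}" using F_int[OF cw] t by auto
  have e: "Phi z t - Phi w t = integral {t0..t} (\<lambda>s. F s (z s) - F s (w s))"
    by (simp add: Phi_def integral_diff[OF iz iw])
  have hi: "((\<lambda>s. (K * C * K^n / fact n) * (s - t0)^n) has_integral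
         (K * C * K^n / fact n) * ((t - t0)^(Suc n) / Suc n)) {t0..t}"
    by (rule has_integral_mult_right, rule has_integral_pow_shift) (use t in auto)
  have eqf: "(\<lambda>s. (K * C * K^n / fact n) * (s - t0)^n) = (\<lambda>s. K * (C * (K*(s-t0))^n / fact n))"
    by (auto simp: power_mult_distrib)
  have eqv: "(K * C * K^n / fact n) * ((t - t0)^(Suc n) / Suc n) = C * (K*(t-t0))^(Suc n) / fact (Suc n)"
  proof -
    have "(K * C * K^n / fact n) * (u^(Suc n) / Suc n) = C * (K*u)^(Suc n) / fact (Suc n)" for u
      by (simp add: power_mult_distrib field_simps)
    then show ?thesis by blast
  qed
  have hi2: "((\<lambda>s. K * (C * (K*(s-t0))^n / fact n)) has_integral C * (K*(t-t0))^(Suc n) / fact (Suc n)) {t0..t}"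
    using hi unfolding eqf eqv .
  have "norm (integral {t0..t} (\<lambda>s. F s (z s) - F s (w s))) \<le> integral {t0..t} (\<lambda>s. K * (C * (K*(s-t0))^n / fact n))"
  proof (rule integral_norm_bound_integral)
    show "(\<lambda>s. F s (z s) - F s (w s)) integrable_on {t0..t}" using iz iw by (rule integrable_diff)
    show "(\<lambda>s. K * (C * (K * (s - t0)) ^ n / fact n)) integrable_on {t0..t}"
      using hi2 by (rule has_integral_integrable)
    fix s assume s: "s \<in> {t0..t}"
    have "norm (F s (z s) - F s (w s)) \<le> K * \<bar>z s - w s\<bar>" using F_lip by simp
    also have "\<dots> \<le> K * (C * (K*(s-t0))^n / fact n)"
      using hb[of s] s t K0 by (intro mult_left_mono) auto
    finally show "norm (F s (z s) - F s (w s)) \<le> K * (C * (K*(s-t0))^n / fact n)" .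
  qed
  also have "\<dots> = C * (K*(t-t0))^(Suc n) / fact (Suc n)" using hi2 by (rule integral_unique)
  finally show ?thesis using e by simp
qed

lemma pic_Suc: "pic (Suc n) = Phi (pic n)" by (simp add: pic_def)

lemma pic_cont: "continuous_on {t0..t1} (pic n)"
  by (induction n) (auto simp: pic_Suc intro: Phi_cont, simp add: pic_def)

lemma cont_bound:
  fixes f :: "real \<Rightarrow> real"
  assumes "continuous_on {t0..t1} f"
  obtains C where "0 \<le> C" "\<And>t. t \<in> {t0..t1} \<Longrightarrow> \<bar>f t\<bar> \<le> C"
proof -
  have "bounded (f ` {t0..t1})"
    by (rule compact_imp_bounded, rule compact_continuous_image[OF assms]) simp
  then obtain C where "\<forall>y\<in>f ` {t0..t1}. norm y \<le> C" by (auto simp: bounded_iff)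
  then have "\<bar>f t\<bar> \<le> max C 0" if "t \<in> {t0..t1}" for t
    using that by force
  then show ?thesis by (intro that[of "max C 0"]) auto
qed

lemma pic_diff_bound:
  obtains C where "0 \<le> C" "\<And>n t. t \<in> {t0..t1} \<Longrightarrow> \<bar>pic (Suc n) t - pic n t\<bar> \<le> C * (K*(t-t0))^n / fact n"
proof -
  obtain C where C: "0 \<le> C" "\<And>t. t \<in> {t0..t1} \<Longrightarrow> \<bar>pic 1 t - pic 0 t\<bar> \<le> C"
    using cont_bound[of "\<lambda>t. pic 1 t - pic 0 t"] pic_cont by (metis continuous_on_diff)
  have hb: "\<bar>pic (Suc n) t - pic n t\<bar> \<le> C * (K*(t-t0))^n / fact n" if "t \<in> {t0..t1}" for n t
    using that
  proof (induction n arbitrary: t)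
    case 0 then show ?case using C by simp
  next
    case (Suc n)
    have "\<bar>Phi (pic (Suc n)) t - Phi (pic n) t\<bar> \<le> C * (K*(t-t0))^(Suc n) / fact (Suc n)"
      by (rule Phi_diff_bound[OF pic_cont pic_cont _ Suc.prems]) (use Suc.IH in auto)
    then show ?case by (simp add: pic_Suc)
  qed
  show ?thesis using hb by (rule that[OF C(1)])
qed

lemma summable_bound: "summable (\<lambda>n. C * (K*(t1-t0))^n / fact n)"
proof -
  have e: "(\<lambda>n. C * (K*(t1-t0))^n / fact n) = (\<lambda>n. C * (inverse (fact n) * (K*(t1-t0))^n))"
    by (rule ext) (simp add: divide_inverse mult_ac)
  show ?thesis unfolding e by (rule summable_mult[OF summable_exp])
qed

lemma bound_tendsto0: "(\<lambda>n. C * (K*(t1-t0))^n / fact n) \<longlonglongrightarrow> 0"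
  by (rule summable_LIMSEQ_zero[OF summable_bound])

lemma pic_unif: "uniform_limit {t0..t1} pic Zs sequentially"
proof -
  obtain C where C: "0 \<le> C" "\<And>n t. t \<in> {t0..t1} \<Longrightarrow> \<bar>pic (Suc n) t - pic n t\<bar> \<le> C * (K*(t-t0))^n / fact n"
    using pic_diff_bound by blast
  have ul: "uniform_limit {t0..t1} (\<lambda>n t. \<Sum>i<n. pic (Suc i) t - pic i t) (\<lambda>t. suminf (\<lambda>i. pic (Suc i) t - pic i t)) sequentially"
  proof (rule Weierstrass_m_test[OF _ summable_bound[of C]])
    fix n t assume t: "t \<in> {t0..t1}"
    have "norm (pic (Suc n) t - pic n t) \<le> C * (K*(t-t0))^n / fact n" using C t by simp
    also have "\<dots> \<le> C * (K*(t1-t0))^n / fact n"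
      using t K0 C by (intro divide_right_mono mult_left_mono power_mono mult_left_mono) auto
    finally show "norm (pic (Suc n) t - pic n t) \<le> C * (K*(t1-t0))^n / fact n" .
  qed
  have pe: "dist (pic n t) (Zs t) = dist (\<Sum>i<n. pic (Suc i) t - pic i t) (suminf (\<lambda>i. pic (Suc i) t - pic i t))" for n t
  proof -
    have "(\<Sum>i<n. pic (Suc i) t - pic i t) = pic n t - pic 0 t" by (rule sum_lessThan_telescope)
    moreover have "pic 0 t = x" by (simp add: pic_def)
    ultimately show ?thesis unfolding Zs_def dist_real_def by simp
  qed
  show ?thesis
    using ul unfolding uniform_limit_iff pe .
qed

lemma Zs_cont: "continuous_on {t0..t1} Zs"
proof -
  have "\<forall>n. continuous_on {t0..t1} (pic n)" using pic_cont by blast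
  then show ?thesis using uniform_limit_theorem[OF always_eventually pic_unif] by simp
qed

lemma pic_lim: "t \<in> {t0..t1} \<Longrightarrow> (\<lambda>n. pic n t) \<longlonglongrightarrow> Zs t"
  using pic_unif by (rule tendsto_uniform_limitI)

lemma Zs_fix: "t \<in> {t0..t1} \<Longrightarrow> Phi Zs t = Zs t"
proof -
  assume t: "t \<in> {t0..t1}"
  have l1: "(\<lambda>n. pic (Suc n) t) \<longlonglongrightarrow> Zs t"
    using pic_lim[OF t] by (rule LIMSEQ_Suc)
  have l2: "(\<lambda>n. Phi (pic n) t) \<longlonglongrightarrow> Phi Zs t"
  proof (rule LIMSEQ_I)
    fix e :: real assume e: "0 < e"
    define e' where "e' = e / (K * (t1 - t0) + 1)"
    have kt: "0 \<le> K * (t1 - t0)" using K0 t01 by simp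
    have e'0: "0 < e'" using e kt by (simp add: e'_def)
    obtain N where N: "\<forall>n\<ge>N. \<forall>s\<in>{t0..t1}. dist (pic n s) (Zs s) < e'"
      using pic_unif e'0 unfolding uniform_limit_iff eventually_sequentially by blast
    show "\<exists>N. \<forall>n\<ge>N. norm (Phi (pic n) t - Phi Zs t) < e"
    proof (intro exI allI impI)
      fix n assume n: "N \<le> n"
      have "\<bar>Phi (pic n) t - Phi Zs t\<bar> \<le> e' * (K*(t-t0))^(Suc 0) / fact (Suc 0)"
        by (rule Phi_diff_bound[OF pic_cont Zs_cont _ t])
           (use N n in \<open>auto simp: dist_real_def intro!: less_imp_le\<close>)
      also have "\<dots> \<le> e' * (K * (t1 - t0))"
        using t K0 e'0 by (auto intro!: mult_left_mono)
      also have "\<dots> < e' * (K * (t1 - t0) + 1)" using e'0 by simp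
      also have "\<dots> = e" using kt by (simp add: e'_def)
      finally show "norm (Phi (pic n) t - Phi Zs t) < e" by simp
    qed
  qed
  show ?thesis using LIMSEQ_unique[OF l2] l1 by (simp add: pic_Suc)
qed

lemma fix_unique:
  assumes cz: "continuous_on {t0..t1} z" and fz: "\<And>t. t \<in> {t0..t1} \<Longrightarrow> Phi z t = z t"
    and t: "t \<in> {t0..t1}"
  shows "z t = Zs t"
proof -
  obtain C where C: "0 \<le> C" "\<And>t. t \<in> {t0..t1} \<Longrightarrow> \<bar>z t - Zs t\<bar> \<le> C"
    using cont_bound[of "\<lambda>t. z t - Zs t"] cz Zs_cont by (metis continuous_on_diff)
  have b: "\<bar>z s - Zs s\<bar> \<le> C * (K*(s-t0))^n / fact n" if "s \<in> {t0..t1}" for n s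
    using that
  proof (induction n arbitrary: s)
    case 0 then show ?case using C by simp
  next
    case (Suc n)
    have "\<bar>Phi z s - Phi Zs s\<bar> \<le> C * (K*(s-t0))^(Suc n) / fact (Suc n)"
      by (rule Phi_diff_bound[OF cz Zs_cont _ Suc.prems]) (use Suc.IH in auto)
    then show ?case using fz[OF Suc.prems] Zs_fix[OF Suc.prems] by simp
  qed
  have "\<bar>z t - Zs t\<bar> \<le> 0"
  proof (rule LIMSEQ_le_const[OF bound_tendsto0[of C]], intro exI allI impI)
    fix n :: nat
    have "\<bar>z t - Zs t\<bar> \<le> C * (K*(t-t0))^n / fact n" by (rule b[OF t])
    also have "\<dots> \<le> C * (K*(t1-t0))^n / fact n"
      using t K0 C by (intro divide_right_mono mult_left_mono power_mono mult_left_mono) auto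
    finally show "\<bar>z t - Zs t\<bar> \<le> C * (K*(t1-t0))^n / fact n" .
  qed
  then show ?thesis by simp
qed

end


lemma last_cross:
  fixes z g h b :: "real \<Rightarrow> real"
  assumes tt: "t0 \<le> \<tau>" and cz: "continuous_on {t0..\<tau>} z" and cg: "continuous_on {t0..\<tau>} g"
    and ch: "continuous_on {t0..\<tau>} h"
    and eq: "\<And>t. t \<in> {t0..\<tau>} \<Longrightarrow> z t = x + integral {t0..t} g + b t"
    and st: "z t0 \<le> h t0" and en: "h \<tau> < z \<tau>"
    and neg: "\<And>s. s \<in> {t0..\<tau>} \<Longrightarrow> h s \<le> z s \<Longrightarrow> g s \<le> 0"
  shows "\<exists>\<sigma>\<in>{t0..\<tau>}. z \<tau> - h \<sigma> \<le> b \<tau> - b \<sigma>"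
proof -
  define S where "S = {t0..\<tau>} \<inter> (\<lambda>s. z s - h s) -` {..0}"
  have cS: "closed S" unfolding S_def
    by (rule continuous_closed_preimage) (auto intro: continuous_intros cz ch)
  have t0S: "t0 \<in> S" using st tt by (auto simp: S_def)
  have bS: "bdd_above S" by (auto simp: S_def bdd_above_def)
  define \<sigma> where "\<sigma> = Sup S"
  have sS: "\<sigma> \<in> S" unfolding \<sigma>_def using closed_contains_Sup[OF _ bS cS] t0S by auto
  then have s1: "t0 \<le> \<sigma>" "\<sigma> \<le> \<tau>" "z \<sigma> \<le> h \<sigma>" by (auto simp: S_def)
  have after: "h s < z s" if "\<sigma> < s" "s \<le> \<tau>" for s
  proof (rule ccontr)
    assume "\<not> h s < z s"
    then have "s \<in> S" using that s1 by (auto simp: S_def)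
    then have "s \<le> \<sigma>" unfolding \<sigma>_def using bS by (rule cSup_upper)
    then show False using that by simp
  qed
  have st\<tau>: "\<sigma> < \<tau>" using s1 en by (metis order_le_less not_less)
  define T where "T = {\<sigma>..\<tau>} \<inter> (\<lambda>s. z s - h s) -` {0..}"
  have "continuous_on {\<sigma>..\<tau>} (\<lambda>s. z s - h s)"
    by (rule continuous_on_subset[of "{t0..\<tau>}"]) (auto intro!: continuous_intros cz ch simp: s1)
  then have cT: "closed T" unfolding T_def
    by (rule continuous_closed_preimage) auto
  have "{\<sigma><..\<tau>} \<subseteq> T" using after by (force simp: T_def)
  then have "closure {\<sigma><..\<tau>} \<subseteq> T" using cT by (rule closure_minimal)
  then have allT: "{\<sigma>..\<tau>} \<subseteq> T" using st\<tau> by simp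
  moreover have "\<sigma> \<in> {\<sigma>..\<tau>}" using st\<tau> by simp
  ultimately have "h \<sigma> \<le> z \<sigma>" by (auto simp: T_def)
  then have zh: "z \<sigma> = h \<sigma>" using s1 by simp
  have gi: "g integrable_on {t0..\<tau>}" by (rule integrable_continuous_interval[OF cg])
  have comb: "integral {t0..\<sigma>} g + integral {\<sigma>..\<tau>} g = integral {t0..\<tau>} g"
    by (rule Henstock_Kurzweil_Integration.integral_combine[OF s1(1,2) gi])
  have gi2: "g integrable_on {\<sigma>..\<tau>}"
    by (rule integrable_continuous_interval, rule continuous_on_subset[OF cg]) (use s1 in auto)
  have "integral {\<sigma>..\<tau>} g \<le> integral {\<sigma>..\<tau>} (\<lambda>_. 0::real)"
  proof (rule integral_le[OF gi2])
    show "(\<lambda>_. 0::real) integrable_on {\<sigma>..\<tau>}" by (rule integrable_0)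
    fix s assume s: "s \<in> {\<sigma>..\<tau>}"
    then have "h s \<le> z s" using allT by (auto simp: T_def)
    then show "g s \<le> 0" using neg[of s] s s1 by auto
  qed
  then have ineg: "integral {\<sigma>..\<tau>} g \<le> 0" by simp
  have "z \<tau> - z \<sigma> = integral {\<sigma>..\<tau>} g + b \<tau> - b \<sigma>"
    using eq[of \<tau>] eq[of \<sigma>] s1 tt comb by auto
  then show ?thesis using ineg zh s1 by (intro bexI[of _ \<sigma>]) auto
qed

lemma riemann_bound:
  fixes g :: "real \<Rightarrow> real" and j :: nat and \<alpha> \<beta> h \<eta> :: real
  assumes ab: "\<alpha> \<le> \<beta>" and cg: "continuous_on {\<alpha>..\<beta>} g" and h0: "0 \<le> h"
    and eta: "\<And>s p. s \<in> {\<alpha>..\<beta>} \<Longrightarrow> p \<in> {\<alpha>..\<beta>} \<Longrightarrow> p \<le> s \<Longrightarrow> s \<le> p + h \<Longrightarrow> \<bar>g s - g p\<bar> \<le> \<eta>"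
  shows "\<alpha> + real j * h \<le> \<beta> \<Longrightarrow> \<bar>integral {\<alpha>..\<alpha> + real j*h} g - h * (\<Sum>k<j. g (\<alpha> + real k*h))\<bar> \<le> real j * h * \<eta>"
proof (induction j)
  case 0 then show ?case by simp
next
  case (Suc j)
  let ?p = "\<alpha> + j*h" and ?q = "\<alpha> + Suc j * h"
  have pq: "\<alpha> \<le> ?p" "?p \<le> ?q" "?q \<le> \<beta>" using Suc.prems h0 by (auto simp: algebra_simps)
  have gi: "g integrable_on {\<alpha>..?q}"
    by (rule integrable_continuous_interval, rule continuous_on_subset[OF cg]) (use pq in auto)
  have comb: "integral {\<alpha>..?p} g + integral {?p..?q} g = integral {\<alpha>..?q} g"
    by (rule Henstock_Kurzweil_Integration.integral_combine[OF pq(1,2) gi])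
  have gi2: "g integrable_on {?p..?q}"
    by (rule integrable_continuous_interval, rule continuous_on_subset[OF cg]) (use pq in auto)
  have A: "integral {?p..?q} (\<lambda>s. g s - g ?p) = integral {?p..?q} g - integral {?p..?q} (\<lambda>s. g ?p)"
    by (rule integral_diff[OF gi2]) (rule integrable_const_ivl)
  have qp: "?q - ?p = h" by (simp add: algebra_simps)
  have B: "integral {?p..?q} (\<lambda>s. g ?p) = h * g ?p" using pq qp by simp
  have e1: "integral {?p..?q} g - h * g ?p = integral {?p..?q} (\<lambda>s. g s - g ?p)" using A B by linarith
  have "norm (integral {?p..?q} (\<lambda>s. g s - g ?p)) \<le> integral {?p..?q} (\<lambda>_. \<eta>)"
  proof (rule integral_norm_bound_integral)
    show "(\<lambda>s. g s - g ?p) integrable_on {?p..?q}" using gi2 by (intro integrable_diff) auto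
    show "(\<lambda>_. \<eta>) integrable_on {?p..?q}" by (rule integrable_const_ivl)
    fix s assume s: "s \<in> {?p..?q}"
    have s1: "?p \<le> s" "s \<le> ?q" using s by auto
    have jh: "0 \<le> real j * h" using h0 by simp
    have "\<alpha> \<le> s" using s1(1) jh by linarith
    moreover have "s \<le> \<beta>" using s1(2) pq(3) by linarith
    moreover have "\<alpha> \<le> ?p" using jh by linarith
    moreover have "?p \<le> \<beta>" using pq by linarith
    moreover have "s \<le> ?p + h" using s1(2) qp by linarith
    ultimately have "s \<in> {\<alpha>..\<beta>}" "?p \<in> {\<alpha>..\<beta>}" "s \<le> ?p + h" by auto
    then have "\<bar>g s - g ?p\<bar> \<le> \<eta>" using s1 by (intro eta) auto
    then show "norm (g s - g ?p) \<le> \<eta>" by simp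
  qed
  also have "\<dots> = h * \<eta>" using pq by (simp add: algebra_simps)
  finally have b1: "\<bar>integral {?p..?q} g - h * g ?p\<bar> \<le> h * \<eta>" using e1 by simp
  have IH: "\<bar>integral {\<alpha>..?p} g - h * (\<Sum>k<j. g (\<alpha> + k*h))\<bar> \<le> j * h * \<eta>"
    using Suc.IH pq by simp
  have "integral {\<alpha>..?q} g - h * (\<Sum>k<Suc j. g (\<alpha> + k*h)) =
      (integral {\<alpha>..?p} g - h * (\<Sum>k<j. g (\<alpha> + k*h))) + (integral {?p..?q} g - h * g ?p)"
    using comb by (simp add: algebra_simps)
  then have "\<bar>integral {\<alpha>..?q} g - h * (\<Sum>k<Suc j. g (\<alpha> + k*h))\<bar> \<le> j * h * \<eta> + h * \<eta>"
    using IH b1 by linarith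
  then show ?case by (simp add: algebra_simps)
qed

lemma riemann_tendsto:
  fixes g :: "real \<Rightarrow> real"
  assumes ab: "\<alpha> \<le> \<beta>" and cg: "continuous_on {\<alpha>..\<beta>} g"
  shows "(\<lambda>n. (\<beta>-\<alpha>)/Suc n * (\<Sum>k<Suc n. g (\<alpha> + k*((\<beta>-\<alpha>)/Suc n)))) \<longlonglongrightarrow> integral {\<alpha>..\<beta>} g"
proof (rule LIMSEQ_I)
  fix e :: real assume e: "0 < e"
  define \<eta> where "\<eta> = e / (2 * (\<beta> - \<alpha> + 1))"
  have \<eta>0: "0 < \<eta>" using e ab by (simp add: \<eta>_def)
  have uc: "uniformly_continuous_on {\<alpha>..\<beta>} g" by (rule compact_uniformly_continuous[OF cg]) simp
  obtain d where d: "d > 0" "\<And>s p. s \<in> {\<alpha>..\<beta>} \<Longrightarrow> p \<in> {\<alpha>..\<beta>} \<Longrightarrow> dist s p < d \<Longrightarrow> dist (g s) (g p) < \<eta>"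
    using uc \<eta>0 unfolding uniformly_continuous_on_def by metis
  obtain N :: nat where N: "(\<beta> - \<alpha>) / d < N" using reals_Archimedean2 by blast
  show "\<exists>N. \<forall>n\<ge>N. norm ((\<beta>-\<alpha>)/Suc n * (\<Sum>k<Suc n. g (\<alpha> + k*((\<beta>-\<alpha>)/Suc n))) - integral {\<alpha>..\<beta>} g) < e"
  proof (intro exI allI impI)
    fix n assume n: "N \<le> n"
    define h where "h = (\<beta>-\<alpha>)/Suc n"
    have h0: "0 \<le> h" using ab by (simp add: h_def)
    have "(\<beta> - \<alpha>) / d < Suc n" using N n by linarith
    then have hd: "h < d" using d ab by (simp add: h_def field_simps)
    have last: "\<alpha> + real (Suc n) * h = \<beta>" by (simp add: h_def)
    have "\<bar>integral {\<alpha>..\<alpha> + real (Suc n) * h} g - h * (\<Sum>k<Suc n. g (\<alpha> + k*h))\<bar> \<le> real (Suc n) * h * \<eta>"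
    proof (rule riemann_bound[OF ab cg h0])
      fix s p assume "s \<in> {\<alpha>..\<beta>}" "p \<in> {\<alpha>..\<beta>}" "p \<le> s" "s \<le> p + h"
      then show "\<bar>g s - g p\<bar> \<le> \<eta>" using d(2)[of s p] hd by (auto simp: dist_real_def)
    qed (rule eq_refl[OF last])
    also have "\<dots> = (\<beta> - \<alpha>) * \<eta>" by (simp add: h_def)
    also have "\<dots> < e"
    proof -
      have "\<alpha> * e \<le> \<beta> * e" using ab e by (intro mult_right_mono) auto
      then show ?thesis using ab e by (simp add: \<eta>_def field_simps, linarith)
    qed
    finally show "norm ((\<beta>-\<alpha>)/Suc n * (\<Sum>k<Suc n. g (\<alpha> + k*((\<beta>-\<alpha>)/Suc n))) - integral {\<alpha>..\<beta>} g) < e"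
      unfolding last by (simp add: h_def abs_minus_commute)
  qed
qed

lemma measurable_integral_param:
  fixes G :: "'w \<Rightarrow> real \<Rightarrow> real"
  assumes ab: "\<alpha> \<le> \<beta>" and cG: "\<And>\<omega>. \<omega> \<in> space M \<Longrightarrow> continuous_on {\<alpha>..\<beta>} (G \<omega>)"
    and mG: "\<And>s. s \<in> {\<alpha>..\<beta>} \<Longrightarrow> (\<lambda>\<omega>. G \<omega> s) \<in> borel_measurable M"
  shows "(\<lambda>\<omega>. integral {\<alpha>..\<beta>} (G \<omega>)) \<in> borel_measurable M"
proof (rule borel_measurable_LIMSEQ_real)
  fix \<omega> assume "\<omega> \<in> space M"
  then show "(\<lambda>n. (\<beta>-\<alpha>)/Suc n * (\<Sum>k<Suc n. G \<omega> (\<alpha> + k*((\<beta>-\<alpha>)/Suc n)))) \<longlonglongrightarrow> integral {\<alpha>..\<beta>} (G \<omega>)"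
    by (intro riemann_tendsto ab cG)
next
  fix n
  have pt: "\<alpha> + real k * ((\<beta>-\<alpha>)/Suc n) \<in> {\<alpha>..\<beta>}" if "k < Suc n" for k
  proof -
    have "real k * ((\<beta>-\<alpha>)/Suc n) \<le> real (Suc n) * ((\<beta>-\<alpha>)/Suc n)"
      using that ab by (intro mult_right_mono) auto
    then show ?thesis using ab by auto
  qed
  show "(\<lambda>\<omega>. (\<beta>-\<alpha>)/Suc n * (\<Sum>k<Suc n. G \<omega> (\<alpha> + k*((\<beta>-\<alpha>)/Suc n)))) \<in> borel_measurable M"
    by (intro borel_measurable_times borel_measurable_const borel_measurable_sum mG pt) auto
qed


lemma nd_shift:
  assumes "\<sigma> > 0"
  shows "normal_density 0 \<sigma> v * exp (\<mu> * v) = exp (\<mu>\<^sup>2 * \<sigma>\<^sup>2 / 2) * normal_density (\<mu> * \<sigma>\<^sup>2) \<sigma> v"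
proof -
  have e: "-(v - 0)\<^sup>2 / (2 * \<sigma>\<^sup>2) + \<mu> * v = \<mu>\<^sup>2 * \<sigma>\<^sup>2 / 2 + (-(v - \<mu> * \<sigma>\<^sup>2)\<^sup>2 / (2 * \<sigma>\<^sup>2))"
    using assms by (simp add: field_simps power2_eq_square)
  have "normal_density 0 \<sigma> v * exp (\<mu> * v) = 1 / sqrt (2 * pi * \<sigma>\<^sup>2) * exp (-(v - 0)\<^sup>2 / (2 * \<sigma>\<^sup>2) + \<mu> * v)"
  proof -
    have x: "exp (-(v - 0)\<^sup>2 / (2 * \<sigma>\<^sup>2) + \<mu> * v) = exp (-(v - 0)\<^sup>2 / (2 * \<sigma>\<^sup>2)) * exp (\<mu> * v)"
      by (rule exp_add)
    show ?thesis by (simp only: x normal_density_def mult.assoc)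
  qed
  also have "\<dots> = exp (\<mu>\<^sup>2 * \<sigma>\<^sup>2 / 2) * normal_density (\<mu> * \<sigma>\<^sup>2) \<sigma> v"
  proof -
    have y: "exp (\<mu>\<^sup>2 * \<sigma>\<^sup>2 / 2 + (-(v - \<mu> * \<sigma>\<^sup>2)\<^sup>2 / (2 * \<sigma>\<^sup>2))) = exp (\<mu>\<^sup>2 * \<sigma>\<^sup>2 / 2) * exp (-(v - \<mu> * \<sigma>\<^sup>2)\<^sup>2 / (2 * \<sigma>\<^sup>2))"
      by (rule exp_add)
    show ?thesis unfolding e y by (simp only: normal_density_def mult.assoc mult.left_commute)
  qed
  finally show ?thesis .
qed

lemma nd_integral_1:
  assumes "\<sigma> > 0"
  shows "(\<integral>\<^sup>+ v. ennreal (normal_density m \<sigma> v) \<partial>lborel) = 1"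
proof -
  interpret p: prob_space "density lborel (\<lambda>x. ennreal (normal_density m \<sigma> x))"
    by (rule prob_space_normal_density[OF assms])
  have "emeasure (density lborel (\<lambda>x. ennreal (normal_density m \<sigma> x))) UNIV = 1"
    using p.emeasure_space_1 by simp
  then show ?thesis by (subst (asm) emeasure_density) auto
qed

lemma normal_mgf:
  assumes "\<sigma> > 0"
  shows "(\<integral>\<^sup>+ v. ennreal (normal_density 0 \<sigma> v) * ennreal (exp (\<mu> * v)) \<partial>lborel) = ennreal (exp (\<mu>\<^sup>2 * \<sigma>\<^sup>2 / 2))"
proof -
  have "(\<integral>\<^sup>+ v. ennreal (normal_density 0 \<sigma> v) * ennreal (exp (\<mu> * v)) \<partial>lborel)
      = (\<integral>\<^sup>+ v. ennreal (exp (\<mu>\<^sup>2 * \<sigma>\<^sup>2 / 2)) * ennreal (normal_density (\<mu> * \<sigma>\<^sup>2) \<sigma> v) \<partial>lborel)"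
    using nd_shift[OF assms] by (intro nn_integral_cong) (simp add: normal_density_nonneg flip: ennreal_mult)
  also have "\<dots> = ennreal (exp (\<mu>\<^sup>2 * \<sigma>\<^sup>2 / 2)) * (\<integral>\<^sup>+ v. ennreal (normal_density (\<mu> * \<sigma>\<^sup>2) \<sigma> v) \<partial>lborel)"
    by (rule nn_integral_cmult) simp
  also have "\<dots> = ennreal (exp (\<mu>\<^sup>2 * \<sigma>\<^sup>2 / 2))" using nd_integral_1[OF assms] by simp
  finally show ?thesis .
qed

lemma cosh_int:
  assumes "\<sigma> > 0" "s\<^sup>2 = 1"
  shows "(\<integral>\<^sup>+ v. ennreal (normal_density 0 \<sigma> v) * ennreal (cosh (l * (y - s * v))) \<partial>lborel)
     = ennreal (cosh (l * y) * exp (l\<^sup>2 * \<sigma>\<^sup>2 / 2))"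
proof -
  have pw: "ennreal (normal_density 0 \<sigma> v) * ennreal (cosh (l * (y - s * v))) =
     ennreal (exp (l * y) / 2) * (ennreal (normal_density 0 \<sigma> v) * ennreal (exp ((- l * s) * v))) +
     ennreal (exp (- l * y) / 2) * (ennreal (normal_density 0 \<sigma> v) * ennreal (exp ((l * s) * v)))" for v
  proof -
    have r: "normal_density 0 \<sigma> v * cosh (l * (y - s * v)) =
      exp (l * y) / 2 * (normal_density 0 \<sigma> v * exp ((- l * s) * v)) +
      exp (- l * y) / 2 * (normal_density 0 \<sigma> v * exp ((l * s) * v))"
      by (simp add: cosh_field_def algebra_simps flip: exp_add)
    have nd0: "0 \<le> normal_density 0 \<sigma> v" by (rule normal_density_nonneg)
    have m: "\<And>a b c::real. 0\<le>a \<Longrightarrow> 0\<le>b \<Longrightarrow> 0\<le>c \<Longrightarrow> ennreal (a*(b*c)) = ennreal a * (ennreal b * ennreal c)"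
      by (simp add: ennreal_mult)
    have c0: "0 \<le> cosh (l * (y - s * v))" using cosh_real_ge_1[of "l * (y - s * v)"] by linarith
    have "ennreal (normal_density 0 \<sigma> v) * ennreal (cosh (l * (y - s * v))) =
       ennreal (normal_density 0 \<sigma> v * cosh (l * (y - s * v)))"
      by (rule ennreal_mult[symmetric, OF nd0 c0])
    also have "\<dots> = ennreal (exp (l * y) / 2 * (normal_density 0 \<sigma> v * exp ((- l * s) * v))) +
      ennreal (exp (- l * y) / 2 * (normal_density 0 \<sigma> v * exp ((l * s) * v)))"
      unfolding r by (rule ennreal_plus) (use nd0 in auto)
    also have "\<dots> = ennreal (exp (l * y) / 2) * (ennreal (normal_density 0 \<sigma> v) * ennreal (exp ((- l * s) * v))) +
     ennreal (exp (- l * y) / 2) * (ennreal (normal_density 0 \<sigma> v) * ennreal (exp ((l * s) * v)))"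
      by (subst (1 2) m) (auto simp: nd0)
    finally show ?thesis .
  qed
  have "(\<integral>\<^sup>+ v. ennreal (normal_density 0 \<sigma> v) * ennreal (cosh (l * (y - s * v))) \<partial>lborel)
      = ennreal (exp (l * y) / 2) * (\<integral>\<^sup>+ v. ennreal (normal_density 0 \<sigma> v) * ennreal (exp ((- l * s) * v)) \<partial>lborel) +
        ennreal (exp (- l * y) / 2) * (\<integral>\<^sup>+ v. ennreal (normal_density 0 \<sigma> v) * ennreal (exp ((l * s) * v)) \<partial>lborel)"
    unfolding pw by (subst nn_integral_add) (auto simp: nn_integral_cmult)
  also have "\<dots> = ennreal (exp (l * y) / 2) * ennreal (exp (l\<^sup>2 * \<sigma>\<^sup>2 / 2)) + ennreal (exp (- l * y) / 2) * ennreal (exp (l\<^sup>2 * \<sigma>\<^sup>2 / 2))"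
  proof -
    have sq1: "(- l * s)\<^sup>2 = l\<^sup>2" using assms(2) by (simp add: power_mult_distrib)
    have sq2: "(l * s)\<^sup>2 = l\<^sup>2" using assms(2) by (simp add: power_mult_distrib)
    have i1: "(\<integral>\<^sup>+ v. ennreal (normal_density 0 \<sigma> v) * ennreal (exp ((- l * s) * v)) \<partial>lborel) = ennreal (exp (l\<^sup>2 * \<sigma>\<^sup>2 / 2))"
      using normal_mgf[OF assms(1), of "- l * s", unfolded sq1] .
    have i2: "(\<integral>\<^sup>+ v. ennreal (normal_density 0 \<sigma> v) * ennreal (exp ((l * s) * v)) \<partial>lborel) = ennreal (exp (l\<^sup>2 * \<sigma>\<^sup>2 / 2))"
      using normal_mgf[OF assms(1), of "l * s", unfolded sq2] .
    show ?thesis by (simp only: i1 i2)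
  qed
  also have "\<dots> = ennreal (cosh (l * y) * exp (l\<^sup>2 * \<sigma>\<^sup>2 / 2))"
  proof -
    let ?e = "exp (l\<^sup>2 * \<sigma>\<^sup>2 / 2)"
    have "ennreal (exp (l * y) / 2) * ennreal ?e + ennreal (exp (- l * y) / 2) * ennreal ?e
        = ennreal (exp (l * y) / 2 * ?e) + ennreal (exp (- l * y) / 2 * ?e)"
      by (simp only: ennreal_mult[symmetric] exp_ge_zero divide_nonneg_pos zero_less_numeral)
    also have "\<dots> = ennreal (exp (l * y) / 2 * ?e + exp (- l * y) / 2 * ?e)"
      by (rule ennreal_plus[symmetric]) auto
    also have "exp (l * y) / 2 * ?e + exp (- l * y) / 2 * ?e = cosh (l * y) * ?e"
      by (simp add: cosh_field_def field_simps)
    finally show ?thesis .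
  qed
  finally show ?thesis .
qed


fun dd :: "real \<Rightarrow> (nat \<Rightarrow> real) \<Rightarrow> nat \<Rightarrow> real" where
  "dd s w 0 = 0"
| "dd s w (Suc k) = max (dd s w k - s * w k) 0"

definition hit :: "real \<Rightarrow> real \<Rightarrow> (nat \<Rightarrow> real) \<Rightarrow> nat \<Rightarrow> bool" where
  "hit s c w m \<longleftrightarrow> (\<exists>j\<in>{..m}. c \<le> dd s w j)"

lemma dd_nonneg: "0 \<le> dd s w k" by (cases k) auto

lemma dd_restrict: "k \<le> m \<Longrightarrow> dd s (restrict w {..<m}) k = dd s w k"
  by (induction k) auto

lemma hit_restrict: "k \<le> m \<Longrightarrow> hit s c (restrict w {..<m}) k = hit s c w k"
  unfolding hit_def using dd_restrict[of _ m s w] by auto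

lemma hit_Suc: "hit s c w (Suc m) \<longleftrightarrow> hit s c w m \<or> c \<le> dd s w (Suc m)"
  unfolding hit_def by (auto simp: atMost_Suc)

lemma hit_0: "0 < c \<Longrightarrow> \<not> hit s c w 0"
  unfolding hit_def by auto

lemma dd_meas: "k \<le> m \<Longrightarrow> (\<lambda>w. dd s w k) \<in> borel_measurable (PiM {..<m} (\<lambda>_. borel))"
proof (induction k)
  case 0 then show ?case by simp
next
  case (Suc k)
  have "(\<lambda>w. w k) \<in> borel_measurable (PiM {..<m} (\<lambda>_. borel))"
    using Suc.prems by (intro measurable_component_singleton) auto
  then show ?case using Suc by (simp add: borel_measurable_max borel_measurable_diff borel_measurable_times)
qed

lemma hit_meas: "k \<le> m \<Longrightarrow> Measurable.pred (PiM {..<m} (\<lambda>_. borel)) (\<lambda>w. hit s c w k)"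
  unfolding hit_def
proof (intro pred_intros_finite)
  fix j assume "k \<le> m" "j \<in> {..k}"
  then have [measurable]: "(\<lambda>w. dd s w j) \<in> borel_measurable (PiM {..<m} (\<lambda>_. borel))"
    by (intro dd_meas) auto
  show "Measurable.pred (PiM {..<m} (\<lambda>_. borel)) (\<lambda>w. c \<le> dd s w j)" by measurable
qed simp

lemma cosh_max_le:
  fixes l z :: real
  assumes "0 < l"
  shows "cosh (l * max z 0) \<le> cosh (l * z)"
proof (cases "z \<ge> 0")
  case True then have "max z 0 = z" by simp
  then show ?thesis by simp
next
  case False then show ?thesis using cosh_real_ge_1[of "l*z"] by simp
qed

lemma inner_bound:
  assumes \<sigma>: "\<sigma> > 0" and s: "s\<^sup>2 = 1" and l: "0 < l" and C: "0 < C"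
  shows "(\<integral>\<^sup>+ v. ennreal (normal_density 0 \<sigma> v) * ennreal (cosh (l * max (y - s * v) 0) / C) \<partial>lborel)
     \<le> ennreal (exp (l\<^sup>2 * \<sigma>\<^sup>2 / 2) * (cosh (l * y) / C))"
proof -
  have "(\<integral>\<^sup>+ v. ennreal (normal_density 0 \<sigma> v) * ennreal (cosh (l * max (y - s * v) 0) / C) \<partial>lborel)
     \<le> (\<integral>\<^sup>+ v. ennreal (normal_density 0 \<sigma> v) * ennreal (cosh (l * (y - s * v))) * ennreal (1 / C) \<partial>lborel)"
  proof (rule nn_integral_mono)
    fix v
    have "cosh (l * max (y - s * v) 0) / C \<le> cosh (l * (y - s * v)) * (1 / C)"
      using cosh_max_le[OF l, of "y - s * v"] C by (simp add: divide_right_mono)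
    then have "ennreal (cosh (l * max (y - s * v) 0) / C) \<le> ennreal (cosh (l * (y - s * v))) * ennreal (1 / C)"
      using C cosh_real_ge_1[of "l * (y - s * v)"] by (simp add: ennreal_mult[symmetric])
    then show "ennreal (normal_density 0 \<sigma> v) * ennreal (cosh (l * max (y - s * v) 0) / C)
        \<le> ennreal (normal_density 0 \<sigma> v) * ennreal (cosh (l * (y - s * v))) * ennreal (1 / C)"
      by (simp add: mult.assoc mult_left_mono)
  qed
  also have "\<dots> = (\<integral>\<^sup>+ v. ennreal (normal_density 0 \<sigma> v) * ennreal (cosh (l * (y - s * v))) \<partial>lborel) * ennreal (1 / C)"
  proof -
    have m1[measurable]: "(\<lambda>v. normal_density 0 \<sigma> v) \<in> borel_measurable borel"
      unfolding normal_density_def using \<sigma> by (intro borel_measurable_continuous_onI continuous_intros) auto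
    have m2[measurable]: "(\<lambda>v. cosh (l * (y - s * v))) \<in> borel_measurable borel"
      by (intro borel_measurable_continuous_onI continuous_intros)
    show ?thesis by (rule nn_integral_multc) measurable
  qed
  also have "\<dots> = ennreal (cosh (l * y) * exp (l\<^sup>2 * \<sigma>\<^sup>2 / 2)) * ennreal (1 / C)"
    by (simp only: cosh_int[OF \<sigma> s])
  also have "\<dots> = ennreal (exp (l\<^sup>2 * \<sigma>\<^sup>2 / 2) * (cosh (l * y) / C))"
    using C cosh_real_ge_1[of "l * y"] by (simp add: ennreal_mult[symmetric] field_simps)
  finally show ?thesis .
qed

lemma dd_bound:
  fixes X :: "nat \<Rightarrow> 'w \<Rightarrow> real"
  assumes P: "prob_space M" and s: "s\<^sup>2 = 1" and \<sigma>: "\<sigma> > 0" and c: "c > 0" and l: "l > 0"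
    and dist: "\<And>i. i < N \<Longrightarrow> distributed M lborel (X i) (\<lambda>y. ennreal (normal_density 0 \<sigma> y))"
    and ind: "prob_space.indep_vars M (\<lambda>_. borel) X {..<N}"
  shows "{\<omega>\<in>space M. hit s c (\<lambda>i. X i \<omega>) N} \<in> sets M \<and>
     measure M {\<omega>\<in>space M. hit s c (\<lambda>i. X i \<omega>) N} \<le> exp (l\<^sup>2 * \<sigma>\<^sup>2 * N / 2) / cosh (l * c)"
proof -
  interpret prob_space M by (rule P)
  define \<phi> where "\<phi> m w = (if hit s c w m then 1 else cosh (l * dd s w m) / cosh (l * c))" for m w
  have cpos: "0 < cosh (l*c)" using cosh_real_ge_1[of "l*c"] by linarith
  have \<phi>0: "0 \<le> \<phi> m w" for m w using cpos cosh_real_ge_1[of "l * dd s w m"] by (simp add: \<phi>_def)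
  have Xm: "X i \<in> borel_measurable M" if "i < N" for i
    using distributed_measurable[OF dist[OF that]] by simp
  have Vm: "(\<lambda>\<omega>. restrict (\<lambda>i. X i \<omega>) {..<m}) \<in> measurable M (PiM {..<m} (\<lambda>_. borel))" if "m \<le> N" for m
    using that by (intro measurable_restrict) (auto intro: Xm)
  have coshm[measurable]: "(\<lambda>x::real. cosh x) \<in> borel_measurable borel"
    by (intro borel_measurable_continuous_onI continuous_intros)
  have main: "m \<le> N \<Longrightarrow> (\<integral>\<^sup>+\<omega>. ennreal (\<phi> m (\<lambda>i. X i \<omega>)) \<partial>M) \<le> ennreal (exp (l\<^sup>2 * \<sigma>\<^sup>2 * m / 2) / cosh (l * c))" for m
  proof (induction m)
    case 0
    have "\<phi> 0 w = 1 / cosh (l*c)" for w using hit_0[OF c] by (simp add: \<phi>_def)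
    then show ?case by (simp add: emeasure_space_1)
  next
    case (Suc m)
    then have mN: "m < N" by simp
    let ?V = "\<lambda>\<omega>. restrict (\<lambda>i. X i \<omega>) {..<m}"
    let ?PV = "PiM {..<m} (\<lambda>_. borel::real measure)"
    let ?e = "exp (l\<^sup>2 * \<sigma>\<^sup>2 / 2)"
    define \<psi> where "\<psi> u v = (if hit s c u m then 1 else cosh (l * max (dd s u m - s * v) 0) / cosh (l*c))" for u v
    define \<phi>' where "\<phi>' u = (if hit s c u m then 1 else cosh (l * dd s u m) / cosh (l*c))" for u
    have \<psi>0: "0 \<le> \<psi> u v" for u v using cpos cosh_real_ge_1[of "l * max (dd s u m - s * v) 0"] by (simp add: \<psi>_def)
    have \<phi>'0: "0 \<le> \<phi>' u" for u using cpos cosh_real_ge_1[of "l * dd s u m"] by (simp add: \<phi>'_def)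
    have step1: "\<phi> (Suc m) (\<lambda>i. X i \<omega>) \<le> \<psi> (?V \<omega>) (X m \<omega>)" for \<omega>
    proof -
      let ?w = "\<lambda>i. X i \<omega>"
      have hr: "hit s c (?V \<omega>) m = hit s c ?w m" by (rule hit_restrict) simp
      have dr: "dd s (?V \<omega>) m = dd s ?w m" by (rule dd_restrict) simp
      show ?thesis
      proof (cases "hit s c ?w m")
        case True then show ?thesis using hr by (simp add: \<phi>_def \<psi>_def hit_Suc)
      next
        case False
        note F = this
        show ?thesis
        proof (cases "c \<le> dd s ?w (Suc m)")
          case True
          have "cosh (l * c) \<le> cosh (l * dd s ?w (Suc m))"
            using True l c dd_nonneg[of s ?w "Suc m"] by (subst cosh_real_nonneg_le_iff) (auto intro: mult_left_mono)
          then have "1 \<le> cosh (l * dd s ?w (Suc m)) / cosh (l*c)" using cpos by simp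
          then show ?thesis using F True hr dr by (simp add: \<phi>_def \<psi>_def hit_Suc)
        next
          case False
          then show ?thesis using F hr dr by (simp add: \<phi>_def \<psi>_def hit_Suc)
        qed
      qed
    qed
    have ind0: "indep_var ?PV ?V (PiM {m} (\<lambda>_. borel)) (\<lambda>\<omega>. restrict (\<lambda>i. X i \<omega>) {m})"
      by (rule indep_var_restrict[OF ind]) (use mN in auto)
    let ?W = "\<lambda>\<omega>. restrict (\<lambda>i. X i \<omega>) {m}"
    let ?PW = "PiM {m} (\<lambda>_. borel::real measure)"
    have joint: "distr M ?PV ?V \<Otimes>\<^sub>M distr M ?PW ?W = distr M (?PV \<Otimes>\<^sub>M ?PW) (\<lambda>\<omega>. (?V \<omega>, ?W \<omega>))"
      using ind0 unfolding indep_var_distribution_eq by blast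
    have Wm: "?W \<in> measurable M ?PW"
      using mN by (intro measurable_restrict) (auto intro: Xm)
    interpret DY: prob_space "distr M ?PW ?W"
      by (rule prob_space_distr) (rule Wm)
    have [measurable]: "(\<lambda>w. dd s w m) \<in> borel_measurable ?PV" by (rule dd_meas) simp
    have [measurable]: "Measurable.pred ?PV (\<lambda>w. hit s c w m)" by (rule hit_meas) simp
    have [measurable]: "(\<lambda>w. w m) \<in> borel_measurable ?PW"
      by (rule measurable_component_singleton) simp
    have \<psi>m: "(\<lambda>p. ennreal (\<psi> (fst p) (snd p m))) \<in> borel_measurable (?PV \<Otimes>\<^sub>M ?PW)"
      unfolding \<psi>_def by measurable
    have pm: "(\<lambda>\<omega>. (?V \<omega>, ?W \<omega>)) \<in> measurable M (?PV \<Otimes>\<^sub>M ?PW)"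
      using Vm[of m] Wm mN by (intro measurable_Pair) auto
    have DYeq: "distr M borel (X m) = density lborel (\<lambda>y. ennreal (normal_density 0 \<sigma> y))"
    proof -
      have "distr M borel (X m) = distr M lborel (X m)" by (rule distr_cong) auto
      also have "\<dots> = density lborel (\<lambda>y. ennreal (normal_density 0 \<sigma> y))"
        by (rule distributed_distr_eq_density[OF dist[OF mN]])
      finally show ?thesis .
    qed
    have ndm[measurable]: "(\<lambda>v. normal_density 0 \<sigma> v) \<in> borel_measurable borel"
      unfolding normal_density_def using \<sigma> by (intro borel_measurable_continuous_onI continuous_intros) auto
    have e1le: "1 \<le> ?e" by simp
    have inner: "(\<integral>\<^sup>+w. ennreal (\<psi> u (w m)) \<partial>distr M ?PW ?W) \<le> ennreal (?e * \<phi>' u)" for u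
    proof -
      have [measurable]: "(\<lambda>v. ennreal (\<psi> u v)) \<in> borel_measurable borel" unfolding \<psi>_def by measurable
      have "(\<integral>\<^sup>+w. ennreal (\<psi> u (w m)) \<partial>distr M ?PW ?W) = (\<integral>\<^sup>+\<omega>. ennreal (\<psi> u (X m \<omega>)) \<partial>M)"
        by (subst nn_integral_distr[OF Wm]) auto
      also have "\<dots> = (\<integral>\<^sup>+v. ennreal (\<psi> u v) \<partial>distr M borel (X m))"
        by (subst nn_integral_distr[OF Xm[OF mN]]) auto
      also have "(\<integral>\<^sup>+v. ennreal (\<psi> u v) \<partial>distr M borel (X m)) = (\<integral>\<^sup>+v. ennreal (normal_density 0 \<sigma> v) * ennreal (\<psi> u v) \<partial>lborel)"
        unfolding DYeq by (rule nn_integral_density) (auto simp: \<psi>_def)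
      also have "\<dots> \<le> ennreal (?e * \<phi>' u)"
      proof (cases "hit s c u m")
        case True
        have "(\<integral>\<^sup>+v. ennreal (normal_density 0 \<sigma> v) * ennreal (\<psi> u v) \<partial>lborel) = 1"
          using True nd_integral_1[OF \<sigma>, of 0] by (simp add: \<psi>_def)
        also have "\<dots> \<le> ennreal (?e * \<phi>' u)" using True e1le by (simp add: \<phi>'_def)
        finally show ?thesis .
      next
        case False
        have "(\<integral>\<^sup>+v. ennreal (normal_density 0 \<sigma> v) * ennreal (\<psi> u v) \<partial>lborel) =
          (\<integral>\<^sup>+v. ennreal (normal_density 0 \<sigma> v) * ennreal (cosh (l * max (dd s u m - s * v) 0) / cosh (l*c)) \<partial>lborel)"
          using False by (simp add: \<psi>_def)
        also have "\<dots> \<le> ennreal (?e * (cosh (l * dd s u m) / cosh (l*c)))"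
          by (rule inner_bound[OF \<sigma> s l cpos])
        finally show ?thesis using False by (simp add: \<phi>'_def)
      qed
      finally show ?thesis .
    qed
    have "(\<integral>\<^sup>+\<omega>. ennreal (\<phi> (Suc m) (\<lambda>i. X i \<omega>)) \<partial>M) \<le> (\<integral>\<^sup>+\<omega>. ennreal (\<psi> (?V \<omega>) (X m \<omega>)) \<partial>M)"
      by (intro nn_integral_mono ennreal_leI step1)
    also have "\<dots> = (\<integral>\<^sup>+p. ennreal (\<psi> (fst p) (snd p m)) \<partial>distr M (?PV \<Otimes>\<^sub>M ?PW) (\<lambda>\<omega>. (?V \<omega>, ?W \<omega>)))"
      by (subst nn_integral_distr[OF pm]) (use \<psi>m in auto)
    also have "\<dots> = (\<integral>\<^sup>+p. ennreal (\<psi> (fst p) (snd p m)) \<partial>(distr M ?PV ?V \<Otimes>\<^sub>M distr M ?PW ?W))"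
      unfolding joint ..
    also have "\<dots> = (\<integral>\<^sup>+u. \<integral>\<^sup>+w. ennreal (\<psi> u (w m)) \<partial>distr M ?PW ?W \<partial>distr M ?PV ?V)"
      by (subst DY.nn_integral_fst[symmetric]) (use \<psi>m in auto)
    also have "\<dots> \<le> (\<integral>\<^sup>+u. ennreal (?e * \<phi>' u) \<partial>distr M ?PV ?V)"
      by (intro nn_integral_mono inner)
    also have "\<dots> = (\<integral>\<^sup>+\<omega>. ennreal (?e * \<phi>' (?V \<omega>)) \<partial>M)"
      by (subst nn_integral_distr[OF Vm[of m]]) (use mN in \<open>auto simp: \<phi>'_def\<close>)
    also have "\<dots> = (\<integral>\<^sup>+\<omega>. ennreal ?e * ennreal (\<phi> m (\<lambda>i. X i \<omega>)) \<partial>M)"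
    proof (rule nn_integral_cong)
      fix \<omega>
      have "\<phi>' (?V \<omega>) = \<phi> m (\<lambda>i. X i \<omega>)"
        unfolding \<phi>'_def \<phi>_def by (simp add: hit_restrict dd_restrict)
      then show "ennreal (?e * \<phi>' (?V \<omega>)) = ennreal ?e * ennreal (\<phi> m (\<lambda>i. X i \<omega>))"
        using \<phi>0 by (simp add: ennreal_mult)
    qed
    also have "\<dots> = ennreal ?e * (\<integral>\<^sup>+\<omega>. ennreal (\<phi> m (\<lambda>i. X i \<omega>)) \<partial>M)"
    proof (rule nn_integral_cmult)
      have [measurable]: "(\<lambda>w. dd s w m) \<in> borel_measurable (PiM {..<N} (\<lambda>_. borel))" by (rule dd_meas) (use mN in simp)
      have [measurable]: "Measurable.pred (PiM {..<N} (\<lambda>_. borel)) (\<lambda>w. hit s c w m)" by (rule hit_meas) (use mN in simp)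
      have "(\<lambda>w. ennreal (\<phi> m w)) \<in> borel_measurable (PiM {..<N} (\<lambda>_. borel))"
        unfolding \<phi>_def by measurable
      from measurable_compose[OF Vm[of N] this]
      have "(\<lambda>\<omega>. ennreal (\<phi> m (restrict (\<lambda>i. X i \<omega>) {..<N}))) \<in> borel_measurable M" by simp
      moreover have "\<phi> m (restrict (\<lambda>i. X i \<omega>) {..<N}) = \<phi> m (\<lambda>i. X i \<omega>)" for \<omega>
        unfolding \<phi>_def using mN by (simp add: hit_restrict dd_restrict)
      ultimately show "(\<lambda>\<omega>. ennreal (\<phi> m (\<lambda>i. X i \<omega>))) \<in> borel_measurable M" by simp
    qed
    also have "\<dots> \<le> ennreal ?e * ennreal (exp (l\<^sup>2 * \<sigma>\<^sup>2 * m / 2) / cosh (l * c))"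
      using Suc.IH mN by (intro mult_left_mono) auto
    also have "\<dots> = ennreal (exp (l\<^sup>2 * \<sigma>\<^sup>2 * Suc m / 2) / cosh (l * c))"
    proof -
      have "?e * (exp (l\<^sup>2 * \<sigma>\<^sup>2 * m / 2) / cosh (l * c)) = exp (l\<^sup>2 * \<sigma>\<^sup>2 * Suc m / 2) / cosh (l * c)"
        by (simp add: field_simps flip: exp_add)
      then show ?thesis using cpos by (simp flip: ennreal_mult)
    qed
    finally show ?case .
  qed
  let ?A = "{\<omega>\<in>space M. hit s c (\<lambda>i. X i \<omega>) N}"
  have [measurable]: "Measurable.pred (PiM {..<N} (\<lambda>_. borel)) (\<lambda>w. hit s c w N)" by (rule hit_meas) simp
  have "Measurable.pred M (\<lambda>\<omega>. hit s c (restrict (\<lambda>i. X i \<omega>) {..<N}) N)"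
    by (rule measurable_compose[OF Vm]) auto
  then have pr: "Measurable.pred M (\<lambda>\<omega>. hit s c (\<lambda>i. X i \<omega>) N)" by (simp add: hit_restrict)
  have As: "?A \<in> sets M" using pr by measurable
  have "emeasure M ?A = (\<integral>\<^sup>+\<omega>. indicator ?A \<omega> \<partial>M)" using As by simp
  also have "\<dots> \<le> (\<integral>\<^sup>+\<omega>. ennreal (\<phi> N (\<lambda>i. X i \<omega>)) \<partial>M)"
    by (intro nn_integral_mono) (auto simp: \<phi>_def indicator_def \<phi>0)
  also have "\<dots> \<le> ennreal (exp (l\<^sup>2 * \<sigma>\<^sup>2 * N / 2) / cosh (l * c))" by (rule main) simp
  finally have "ennreal (measure M ?A) \<le> ennreal (exp (l\<^sup>2 * \<sigma>\<^sup>2 * N / 2) / cosh (l * c))"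
    by (simp add: emeasure_eq_measure)
  then show ?thesis using As cpos by (simp add: ennreal_le_iff)
qed


lemma exit_drawdown:
  fixes a b :: "real \<Rightarrow> real"
  assumes pic: "picard a b t0 t1 L U"
    and amono: "\<And>s t. s \<le> t \<Longrightarrow> a s \<le> a t" and apos: "0 < a t0"
    and Ld: "L = sqrt (a t0) - D" and Ud: "U = sqrt (a t1) + D"
    and d: "0 < d" "d < D"
    and x: "x \<in> {sqrt (a t0) - d .. sqrt (a t0) + d}"
    and b0: "b t0 = 0"
    and tau: "\<tau> \<in> {t0..t1}"
    and out: "picard.Zs a b t0 x L U \<tau> \<notin> {L .. sqrt (a \<tau>) + D}"
  shows "\<exists>\<sigma>\<in>{t0..\<tau>}. D - d \<le> b \<sigma> - b \<tau> \<or> D - d \<le> b \<tau> - b \<sigma>"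
proof -
  interpret picard a b t0 t1 x L U by (rule pic)
  let ?s0 = "sqrt (a t0)"
  have L0: "0 \<le> L" by (rule L0)
  have aa: "0 < a s" if "t0 \<le> s" for s using amono[OF that] apos by simp
  have sq_mono: "sqrt (a s) \<le> sqrt (a t)" if "s \<le> t" for s t using amono[OF that] by simp
  have eqZ: "Zs t = x + integral {t0..t} (\<lambda>s. F s (Zs s)) + b t" if "t \<in> {t0..t1}" for t
    using Zs_fix[OF that] by (simp add: Phi_def)
  have Zt0: "Zs t0 = x" using eqZ[of t0] t01 b0 by simp
  have tt: "t0 \<le> \<tau>" "\<tau> \<le> t1" using tau by auto
  have cZ: "continuous_on {t0..\<tau>} Zs" by (rule continuous_on_subset[OF Zs_cont]) (use tt in auto)
  have cg: "continuous_on {t0..\<tau>} (\<lambda>s. F s (Zs s))"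
    by (rule continuous_on_subset[OF F_cont[OF Zs_cont]]) (use tt in auto)
  have ca': "continuous_on {t0..\<tau>} a" by (rule continuous_on_subset[OF ca]) (use tt in auto)
  show ?thesis
  proof (cases "Zs \<tau> < L")
    case True
    (* lower exit: apply last_cross to negated quantities *)
    have "\<exists>\<sigma>\<in>{t0..\<tau>}. (\<lambda>t. - Zs t) \<tau> - (\<lambda>_. - (?s0 - d)) \<sigma> \<le> (\<lambda>t. - b t) \<tau> - (\<lambda>t. - b t) \<sigma>"
    proof (rule last_cross[where x = "-x" and g = "\<lambda>s. - F s (Zs s)"])
      show "t0 \<le> \<tau>" by (rule tt)
      show "continuous_on {t0..\<tau>} (\<lambda>t. - Zs t)" using cZ by (intro continuous_intros)
      show "continuous_on {t0..\<tau>} (\<lambda>s. - F s (Zs s))" using cg by (intro continuous_intros)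
      show "continuous_on {t0..\<tau>} (\<lambda>_. - (?s0 - d))" by (intro continuous_intros)
      show "- Zs t = - x + integral {t0..t} (\<lambda>s. - F s (Zs s)) + - b t" if "t \<in> {t0..\<tau>}" for t
        using eqZ[of t] that tt by simp
      show "- Zs t0 \<le> - (?s0 - d)" using Zt0 x by simp
      show "- (?s0 - d) < - Zs \<tau>" using True Ld d by simp
      fix s assume s: "s \<in> {t0..\<tau>}" and le: "- (?s0 - d) \<le> - Zs s"
      have cl: "L \<le> clampr L U (Zs s)" "clampr L U (Zs s) \<le> ?s0 - d"
        using clamp_range[OF LU, of "Zs s"] le Ld d by (auto simp: clampr_def)
      have "(clampr L U (Zs s))\<^sup>2 \<le> (?s0 - d)\<^sup>2" using cl L0 by (intro power_mono) auto
      also have "\<dots> \<le> ?s0\<^sup>2" using d Ld L0 by (intro power_mono) auto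
      also have "\<dots> = a t0" using apos by simp
      also have "\<dots> \<le> a s" using amono s by auto
      finally show "- F s (Zs s) \<le> 0" by (simp add: F_def)
    qed
    then obtain \<sigma> where \<sigma>: "\<sigma> \<in> {t0..\<tau>}" "- Zs \<tau> + (?s0 - d) \<le> - b \<tau> + b \<sigma>" by auto
    have "D - d \<le> b \<sigma> - b \<tau>" using \<sigma>(2) True Ld by simp
    then show ?thesis using \<sigma>(1) by blast
  next
    case False
    then have up: "sqrt (a \<tau>) + D < Zs \<tau>" using out by auto
    have "\<exists>\<sigma>\<in>{t0..\<tau>}. Zs \<tau> - (\<lambda>s. sqrt (a s) + d) \<sigma> \<le> b \<tau> - b \<sigma>"
    proof (rule last_cross[where x = x and g = "\<lambda>s. F s (Zs s)"])
      show "t0 \<le> \<tau>" by (rule tt)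
      show "continuous_on {t0..\<tau>} Zs" by (rule cZ)
      show "continuous_on {t0..\<tau>} (\<lambda>s. F s (Zs s))" by (rule cg)
      show "continuous_on {t0..\<tau>} (\<lambda>s. sqrt (a s) + d)" using ca' by (intro continuous_intros)
      show "Zs t = x + integral {t0..t} (\<lambda>s. F s (Zs s)) + b t" if "t \<in> {t0..\<tau>}" for t
        using eqZ[of t] that tt by simp
      show "Zs t0 \<le> sqrt (a t0) + d" using Zt0 x by simp
      show "sqrt (a \<tau>) + d < Zs \<tau>" using up d by simp
      fix s assume s: "s \<in> {t0..\<tau>}" and le: "sqrt (a s) + d \<le> Zs s"
      have s0s: "?s0 \<le> sqrt (a s)" using sq_mono s by auto
      have "sqrt (a s) \<le> sqrt (a t1)" using sq_mono[of s t1] s tt by auto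
      then have sU: "sqrt (a s) \<le> U" using Ud d by linarith
      have "sqrt (a s) \<le> clampr L U (Zs s)"
      proof (cases "U \<le> Zs s")
        case True then show ?thesis using sU LU by (simp add: clampr_def)
      next
        case False
        then have "clampr L U (Zs s) = max L (Zs s)" by (simp add: clampr_def)
        then show ?thesis using le d by simp
      qed
      then have "(sqrt (a s))\<^sup>2 \<le> (clampr L U (Zs s))\<^sup>2" using aa[of s] s by (intro power_mono) auto
      then have "a s \<le> (clampr L U (Zs s))\<^sup>2" using aa[of s] s by simp
      then show "F s (Zs s) \<le> 0" by (simp add: F_def)
    qed
    then obtain \<sigma> where \<sigma>: "\<sigma> \<in> {t0..\<tau>}" "Zs \<tau> - (sqrt (a \<sigma>) + d) \<le> b \<tau> - b \<sigma>" by auto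
    have "sqrt (a \<sigma>) \<le> sqrt (a \<tau>)" using sq_mono \<sigma>(1) by auto
    then have "D - d \<le> b \<tau> - b \<sigma>" using \<sigma>(2) up by linarith
    then show ?thesis using \<sigma>(1) by blast
  qed
qed


lemma event_char:
  fixes a b :: "real \<Rightarrow> real" and B :: "real \<Rightarrow> 'w \<Rightarrow> real"
  assumes pic: "picard a b t0 t1 L U"
    and amono: "\<And>s t. s \<le> t \<Longrightarrow> a s \<le> a t"
    and Ld: "L = sqrt (a t0) - D" and Ud: "U = sqrt (a t1) + D"
    and bdef: "\<And>t. b t = B t \<omega> - B t0 \<omega>"
  shows "(\<exists>z. solves_on a B \<omega> t0 t1 x z \<and> (\<forall>t\<in>{t0..t1}. z t \<in> {sqrt (a t0) - D .. sqrt (a t) + D}))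
     \<longleftrightarrow> (\<forall>t\<in>{t0..t1}. picard.Zs a b t0 x L U t \<in> {sqrt (a t0) - D .. sqrt (a t) + D})"
proof -
  interpret picard a b t0 t1 x L U by (rule pic)
  have clid: "F s z = a s - z\<^sup>2" if "s \<in> {t0..t1}" "z \<in> {sqrt (a t0) - D .. sqrt (a s) + D}" for s z
  proof -
    have sq: "sqrt (a s) \<le> sqrt (a t1)" using amono[of s t1] that by auto
    have z1: "z \<le> sqrt (a s) + D" "sqrt (a t0) - D \<le> z" using that by auto
    have "z \<le> U" using sq z1 Ud by linarith
    moreover have "L \<le> z" using z1 Ld by linarith
    ultimately have "clampr L U z = z" by (simp add: clampr_def)
    then show ?thesis by (simp add: F_def)
  qed
  have intcong: "integral {t0..t} (\<lambda>s. F s (z s)) = integral {t0..t} (\<lambda>s. a s - (z s)\<^sup>2)"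
    if "t \<in> {t0..t1}" "\<forall>t\<in>{t0..t1}. z t \<in> {sqrt (a t0) - D .. sqrt (a t) + D}" for t z
    by (rule integral_cong) (use that clid in auto)
  show ?thesis
  proof
    assume "\<exists>z. solves_on a B \<omega> t0 t1 x z \<and> (\<forall>t\<in>{t0..t1}. z t \<in> {sqrt (a t0) - D .. sqrt (a t) + D})"
    then obtain z where z: "solves_on a B \<omega> t0 t1 x z" "\<forall>t\<in>{t0..t1}. z t \<in> {sqrt (a t0) - D .. sqrt (a t) + D}"
      by blast
    have cz: "continuous_on {t0..t1} z" using z(1) by (simp add: solves_on_def)
    have fz: "Phi z t = z t" if "t \<in> {t0..t1}" for t
      using z(1) that intcong[OF that z(2)] by (simp add: solves_on_def Phi_def bdef)
    show "\<forall>t\<in>{t0..t1}. Zs t \<in> {sqrt (a t0) - D .. sqrt (a t) + D}"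
      using fix_unique[OF cz fz] z(2) by metis
  next
    assume band: "\<forall>t\<in>{t0..t1}. Zs t \<in> {sqrt (a t0) - D .. sqrt (a t) + D}"
    have "solves_on a B \<omega> t0 t1 x Zs"
      unfolding solves_on_def
    proof (intro conjI ballI)
      show "continuous_on {t0..t1} Zs" by (rule Zs_cont)
      fix t assume t: "t \<in> {t0..t1}"
      show "Zs t = x + integral {t0..t} (\<lambda>s. a s - (Zs s)\<^sup>2) + (B t \<omega> - B t0 \<omega>)"
        using Zs_fix[OF t] intcong[OF t band] by (simp add: Phi_def bdef)
    qed
    then show "\<exists>z. solves_on a B \<omega> t0 t1 x z \<and> (\<forall>t\<in>{t0..t1}. z t \<in> {sqrt (a t0) - D .. sqrt (a t) + D})"
      using band by blast
  qed
qed

lemma pic_meas: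
  fixes bf :: "'w \<Rightarrow> real \<Rightarrow> real"
  assumes pic: "\<And>\<omega>. \<omega> \<in> space M \<Longrightarrow> picard a (bf \<omega>) t0 t1 L U"
    and bm: "\<And>t. t \<in> {t0..t1} \<Longrightarrow> (\<lambda>\<omega>. bf \<omega> t) \<in> borel_measurable M"
    and q: "q \<in> {t0..t1}"
  shows "(\<lambda>\<omega>. picard.pic a (bf \<omega>) t0 x L U n q) \<in> borel_measurable M"
  using q
proof (induction n arbitrary: q)
  case 0
  have "(\<lambda>\<omega>. picard.pic a (bf \<omega>) t0 x L U 0 q) \<in> borel_measurable M \<longleftrightarrow> (\<lambda>\<omega>. x) \<in> borel_measurable M"
    by (rule measurable_cong) (simp add: picard.pic_def[OF pic])
  then show ?case by simp
next
  case (Suc n)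
  have eq: "picard.pic a (bf \<omega>) t0 x L U (Suc n) q =
      x + integral {t0..q} (\<lambda>s. a s - (clampr L U (picard.pic a (bf \<omega>) t0 x L U n s))\<^sup>2) + bf \<omega> q"
    if "\<omega> \<in> space M" for \<omega>
    using that by (simp add: picard.pic_Suc[OF pic] picard.Phi_def[OF pic] picard.F_def[OF pic])
  have m: "(\<lambda>\<omega>. integral {t0..q} (\<lambda>s. a s - (clampr L U (picard.pic a (bf \<omega>) t0 x L U n s))\<^sup>2)) \<in> borel_measurable M"
  proof (rule measurable_integral_param)
    show "t0 \<le> q" using Suc.prems by simp
    fix \<omega> assume \<omega>: "\<omega> \<in> space M"
    interpret picard a "bf \<omega>" t0 t1 x L U by (rule pic[OF \<omega>])
    have "continuous_on {t0..t1} (\<lambda>s. a s - (clampr L U (pic n s))\<^sup>2)"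
      using F_cont[OF pic_cont] by (simp add: F_def)
    then show "continuous_on {t0..q} (\<lambda>s. a s - (clampr L U (pic n s))\<^sup>2)"
      by (rule continuous_on_subset) (use Suc.prems in auto)
  next
    fix s assume s: "s \<in> {t0..q}"
    then have "s \<in> {t0..t1}" using Suc.prems by auto
    then have [measurable]: "(\<lambda>\<omega>. picard.pic a (bf \<omega>) t0 x L U n s) \<in> borel_measurable M" by (rule Suc.IH)
    show "(\<lambda>\<omega>. a s - (clampr L U (picard.pic a (bf \<omega>) t0 x L U n s))\<^sup>2) \<in> borel_measurable M"
      unfolding clampr_def by measurable
  qed
  have "(\<lambda>\<omega>. picard.pic a (bf \<omega>) t0 x L U (Suc n) q) \<in> borel_measurable M \<longleftrightarrow>
     (\<lambda>\<omega>. x + integral {t0..q} (\<lambda>s. a s - (clampr L U (picard.pic a (bf \<omega>) t0 x L U n s))\<^sup>2) + bf \<omega> q) \<in> borel_measurable M"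
    by (rule measurable_cong) (rule eq)
  then show ?case using m bm[OF Suc.prems] by simp
qed

lemma Zs_meas:
  fixes bf :: "'w \<Rightarrow> real \<Rightarrow> real"
  assumes pic: "\<And>\<omega>. \<omega> \<in> space M \<Longrightarrow> picard a (bf \<omega>) t0 t1 L U"
    and bm: "\<And>t. t \<in> {t0..t1} \<Longrightarrow> (\<lambda>\<omega>. bf \<omega> t) \<in> borel_measurable M"
    and q: "q \<in> {t0..t1}"
  shows "(\<lambda>\<omega>. picard.Zs a (bf \<omega>) t0 x L U q) \<in> borel_measurable M"
proof (rule borel_measurable_LIMSEQ_real)
  fix \<omega> assume "\<omega> \<in> space M"
  then show "(\<lambda>n. picard.pic a (bf \<omega>) t0 x L U n q) \<longlonglongrightarrow> picard.Zs a (bf \<omega>) t0 x L U q"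
    using picard.pic_lim[OF pic q] by blast
qed (rule pic_meas[OF pic bm q])


definition grid :: "real \<Rightarrow> real \<Rightarrow> nat \<Rightarrow> nat \<Rightarrow> real" where
  "grid t0 t1 n k = t0 + real k * (t1 - t0) / real n"

definition kf :: "real \<Rightarrow> real \<Rightarrow> nat \<Rightarrow> real \<Rightarrow> nat" where
  "kf t0 t1 n t = nat \<lfloor>(t - t0) * real n / (t1 - t0)\<rfloor>"

lemma kf_props:
  assumes t01: "t0 < t1" and t: "t \<in> {t0..t1}" and n: "0 < n"
  shows "kf t0 t1 n t \<le> n" "t0 \<le> grid t0 t1 n (kf t0 t1 n t)" "grid t0 t1 n (kf t0 t1 n t) \<le> t"
    "t < grid t0 t1 n (kf t0 t1 n t) + (t1 - t0) / n"
proof -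
  define y where "y = (t - t0) * real n / (t1 - t0)"
  have y0: "0 \<le> y" using t t01 by (simp add: y_def)
  have yn: "y \<le> n" using t t01 by (simp add: y_def field_simps mult_right_mono)
  have k: "real (kf t0 t1 n t) = real_of_int \<lfloor>y\<rfloor>" using y0 by (simp add: kf_def y_def)
  have k1: "real (kf t0 t1 n t) \<le> y" "y < real (kf t0 t1 n t) + 1" using k by linarith+
  have T: "0 < t1 - t0" using t01 by simp
  show "kf t0 t1 n t \<le> n" using k1 yn by linarith
  show "t0 \<le> grid t0 t1 n (kf t0 t1 n t)" using T n by (simp add: grid_def)
  have "real (kf t0 t1 n t) * (t1 - t0) / real n \<le> y * (t1 - t0) / real n"
    using k1 T n by (intro divide_right_mono mult_right_mono) auto
  also have "\<dots> = t - t0" using T n by (simp add: y_def)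
  finally show "grid t0 t1 n (kf t0 t1 n t) \<le> t" by (simp add: grid_def)
  have "t - t0 = y * (t1 - t0) / real n" using T n by (simp add: y_def)
  also have "\<dots> < (real (kf t0 t1 n t) + 1) * (t1 - t0) / real n"
    using k1 T n by (intro divide_strict_right_mono mult_strict_right_mono) auto
  finally have lt: "t - t0 < (real (kf t0 t1 n t) + 1) * (t1 - t0) / real n" .
  have "(real (kf t0 t1 n t) + 1) * (t1 - t0) / real n = real (kf t0 t1 n t) * (t1 - t0) / real n + (t1 - t0) / real n"
    by (simp add: add_divide_distrib distrib_right)
  then show "t < grid t0 t1 n (kf t0 t1 n t) + (t1 - t0) / n"
    using lt unfolding grid_def by linarith
qed

lemma kf_mono:
  assumes "t0 < t1" "t \<le> t'"
  shows "kf t0 t1 n t \<le> kf t0 t1 n t'"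
proof -
  have "(t - t0) * real n / (t1 - t0) \<le> (t' - t0) * real n / (t1 - t0)"
    using assms by (intro divide_right_mono mult_right_mono) auto
  then show ?thesis unfolding kf_def by (intro nat_mono floor_mono)
qed

lemma dd_ge: "i \<le> j \<Longrightarrow> - s * (\<Sum>l\<in>{i..<j}. w l) \<le> dd s w j"
proof (induction j)
  case 0 then show ?case by simp
next
  case (Suc j)
  show ?case
  proof (cases "i = Suc j")
    case True then show ?thesis using dd_nonneg[of s w "Suc j"] by simp
  next
    case False
    then have ij: "i \<le> j" using Suc.prems by simp
    have "- s * (\<Sum>l\<in>{i..<Suc j}. w l) = - s * (\<Sum>l\<in>{i..<j}. w l) - s * w j"
      using ij by (simp add: algebra_simps)
    also have "\<dots> \<le> dd s w j - s * w j" using Suc.IH[OF ij] by simp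
    also have "\<dots> \<le> dd s w (Suc j)" by simp
    finally show ?thesis .
  qed
qed

lemma grid_hit:
  fixes f :: "real \<Rightarrow> real"
  assumes t01: "t0 < t1" and cf: "continuous_on {t0..t1} f" and sg: "sg\<^sup>2 = 1"
    and st: "t0 \<le> \<sigma>" "\<sigma> \<le> \<tau>" "\<tau> \<le> t1" and r: "r \<le> sg * (f \<sigma> - f \<tau>)" and e: "0 < \<epsilon>"
  shows "\<exists>N0. \<forall>n\<ge>N0. 0 < n \<longrightarrow> hit sg (r - \<epsilon>) (\<lambda>i. f (grid t0 t1 n (Suc i)) - f (grid t0 t1 n i)) n"
proof -
  have uc: "uniformly_continuous_on {t0..t1} f" by (rule compact_uniformly_continuous[OF cf]) simp
  obtain \<delta> where \<delta>: "\<delta> > 0" "\<And>s p. s \<in> {t0..t1} \<Longrightarrow> p \<in> {t0..t1} \<Longrightarrow> dist s p < \<delta> \<Longrightarrow> dist (f s) (f p) < \<epsilon>/2"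
    using uc e unfolding uniformly_continuous_on_def by (metis half_gt_zero)
  obtain N0 :: nat where N0: "(t1 - t0) / \<delta> < N0" using reals_Archimedean2 by blast
  have sgabs: "\<bar>sg * y\<bar> = \<bar>y\<bar>" for y using sg by (auto simp: power2_eq_1_iff abs_mult)
  show ?thesis
  proof (intro exI allI impI)
    fix n assume n: "N0 \<le> n" "0 < n"
    have "(t1 - t0) / \<delta> < n" using N0 n by linarith
    then have Tn: "(t1 - t0) / n < \<delta>" using \<delta>(1) n by (simp add: field_simps)
    let ?g = "grid t0 t1 n"
    define i where "i = kf t0 t1 n \<sigma>"
    define j where "j = kf t0 t1 n \<tau>"
    have \<sigma>I: "\<sigma> \<in> {t0..t1}" and \<tau>I: "\<tau> \<in> {t0..t1}" using st by auto
    note pi = kf_props[OF t01 \<sigma>I n(2), folded i_def]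
    note pj = kf_props[OF t01 \<tau>I n(2), folded j_def]
    have ij: "i \<le> j" unfolding i_def j_def by (rule kf_mono[OF t01 st(2)])
    have giI: "?g i \<in> {t0..t1}" using pi st by auto
    have gjI: "?g j \<in> {t0..t1}" using pj st by auto
    have di: "\<bar>f (?g i) - f \<sigma>\<bar> < \<epsilon>/2"
      using \<delta>(2)[OF giI \<sigma>I] pi Tn by (auto simp: dist_real_def)
    have dj: "\<bar>f (?g j) - f \<tau>\<bar> < \<epsilon>/2"
      using \<delta>(2)[OF gjI \<tau>I] pj Tn by (auto simp: dist_real_def)
    let ?w = "\<lambda>l. f (?g (Suc l)) - f (?g l)"
    have tel: "(\<Sum>l\<in>{i..<j}. ?w l) = f (?g j) - f (?g i)"
      by (rule sum_Suc_diff'[OF ij])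
    have "sg * (f (?g i) - f (?g j)) = sg * (f \<sigma> - f \<tau>) + sg * (f (?g i) - f \<sigma>) - sg * (f (?g j) - f \<tau>)"
      by (simp add: algebra_simps)
    moreover have "- \<bar>f (?g i) - f \<sigma>\<bar> \<le> sg * (f (?g i) - f \<sigma>)" using sgabs[of "f (?g i) - f \<sigma>"] by linarith
    moreover have "sg * (f (?g j) - f \<tau>) \<le> \<bar>f (?g j) - f \<tau>\<bar>" using sgabs[of "f (?g j) - f \<tau>"] by linarith
    ultimately have "r - \<epsilon> \<le> sg * (f (?g i) - f (?g j))" using r di dj by linarith
    also have "\<dots> = - sg * (\<Sum>l\<in>{i..<j}. ?w l)" unfolding tel by (simp add: algebra_simps)
    also have "\<dots> \<le> dd sg ?w j" by (rule dd_ge[OF ij])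
    finally show "hit sg (r - \<epsilon>) ?w n" unfolding hit_def using pj by auto
  qed
qed


lemma exp_cosh_bound:
  fixes c T :: real
  assumes T: "0 < T"
  shows "exp (c\<^sup>2 / (2 * T)) / cosh (c\<^sup>2 / T) \<le> 2 * exp (- c\<^sup>2 / (2 * T))"
proof -
  let ?u = "c\<^sup>2 / T"
  have ch: "exp ?u / 2 \<le> cosh ?u" unfolding cosh_field_def using exp_gt_zero[of "-?u"] by simp
  have cpos: "0 < cosh ?u" using cosh_real_ge_1[of ?u] by linarith
  have "exp (c\<^sup>2 / (2 * T)) / cosh ?u \<le> exp (c\<^sup>2 / (2 * T)) / (exp ?u / 2)"
    using ch cpos by (intro divide_left_mono) auto
  also have "\<dots> = 2 * (exp (c\<^sup>2 / (2 * T)) / exp ?u)" by simp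
  also have "exp (c\<^sup>2 / (2 * T)) / exp ?u = exp (- c\<^sup>2 / (2 * T))"
  proof -
    have "exp (c\<^sup>2 / (2 * T)) / exp ?u = exp (c\<^sup>2 / (2 * T) - ?u)" by (rule exp_diff[symmetric])
    also have "c\<^sup>2 / (2 * T) - ?u = - c\<^sup>2 / (2 * T)" using T by (simp add: field_simps)
    finally show ?thesis .
  qed
  finally show ?thesis .
qed

lemma grid_prob:
  fixes B :: "real \<Rightarrow> 'w \<Rightarrow> real"
  assumes BM: "brownian_motion M B" and t0: "0 \<le> t0" and t01: "t0 < t1" and n: "0 < n"
    and sg: "sg\<^sup>2 = 1" and c: "0 < c"
  shows "{\<omega>\<in>space M. hit sg c (\<lambda>i. B (grid t0 t1 n (Suc i)) \<omega> - B (grid t0 t1 n i) \<omega>) n} \<in> sets M \<and>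
    measure M {\<omega>\<in>space M. hit sg c (\<lambda>i. B (grid t0 t1 n (Suc i)) \<omega> - B (grid t0 t1 n i) \<omega>) n}
      \<le> 2 * exp (- c\<^sup>2 / (2 * (t1 - t0)))"
proof -
  let ?T = "t1 - t0"
  have T: "0 < ?T" using t01 by simp
  let ?g = "grid t0 t1 n"
  have gstep: "?g (Suc i) - ?g i = ?T / n" for i using n by (simp add: grid_def field_simps)
  have gpos: "0 \<le> ?g i" for i using t0 T by (simp add: grid_def)
  have glt: "?g i < ?g (Suc i)" for i
  proof -
    have "0 < ?T / real n" using T n by simp
    then show ?thesis using gstep[of i] by linarith
  qed
  have P: "prob_space M" using BM by (simp add: brownian_motion_def)
  have distr: "distributed M lborel (\<lambda>\<omega>. B (?g (Suc i)) \<omega> - B (?g i) \<omega>) (\<lambda>y. ennreal (normal_density 0 (sqrt (?T / n)) y))"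
    if "i < n" for i
  proof -
    have "distributed M lborel (\<lambda>\<omega>. B (?g (Suc i)) \<omega> - B (?g i) \<omega>) (\<lambda>y. ennreal (normal_density 0 (sqrt (?g (Suc i) - ?g i)) y))"
      using BM gpos[of i] glt[of i] unfolding brownian_motion_def by blast
    then show ?thesis unfolding gstep .
  qed
  have ind: "prob_space.indep_vars M (\<lambda>_. borel) (\<lambda>i \<omega>. B (?g (Suc i)) \<omega> - B (?g i) \<omega>) {..<n}"
  proof -
    have "\<forall>(n::nat) (ts::nat \<Rightarrow> real). 0 \<le> ts 0 \<longrightarrow> (\<forall>i<n. ts i < ts (Suc i)) \<longrightarrow>
        prob_space.indep_vars M (\<lambda>_. borel) (\<lambda>i \<omega>. B (ts (Suc i)) \<omega> - B (ts i) \<omega>) {..<n}"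
      using BM unfolding brownian_motion_def by blast
    then show ?thesis using gpos[of 0] glt by blast
  qed
  have sig: "0 < sqrt (?T / n)" using T n by simp
  have l: "0 < c / ?T" using c T by simp
  from dd_bound[OF P sg sig c l distr ind]
  have res: "{\<omega>\<in>space M. hit sg c (\<lambda>i. B (?g (Suc i)) \<omega> - B (?g i) \<omega>) n} \<in> sets M \<and>
     measure M {\<omega>\<in>space M. hit sg c (\<lambda>i. B (?g (Suc i)) \<omega> - B (?g i) \<omega>) n}
       \<le> exp ((c / ?T)\<^sup>2 * (sqrt (?T / n))\<^sup>2 * n / 2) / cosh (c / ?T * c)" by simp
  have e1: "(c / ?T)\<^sup>2 * (sqrt (?T / n))\<^sup>2 * n / 2 = c\<^sup>2 / (2 * ?T)"
  proof -
    have sq: "(sqrt (?T / n))\<^sup>2 = ?T / n" using T n by simp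
    have "(c / X)\<^sup>2 * (X / n) * n / 2 = c\<^sup>2 / (2 * X)" if "0 < X" for X
      using that n by (simp add: power2_eq_square field_simps)
    then show ?thesis unfolding sq using T by blast
  qed
  have e2: "c / ?T * c = c\<^sup>2 / ?T" by (simp add: power2_eq_square)
  show ?thesis using res exp_cosh_bound[OF T, of c] unfolding e1 e2 by linarith
qed


theorem lemma6p1:
  fixes M :: "'w measure" and B :: "real \<Rightarrow> 'w \<Rightarrow> real"
    and \<beta> a0 t0 t1 d D x :: real
  defines "a \<equiv> (\<lambda>t::real. a0 + \<beta> * t / 4)"
  assumes BM: "brownian_motion M B"
    and "\<beta> > 0" and "a0 > 0"
    and "0 < t0" and "t0 < t1"
    and "0 < d" and "d < D" and "D < sqrt (a t0)"
    and "x \<in> {sqrt (a t0) - d .. sqrt (a t0) + d}"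
  shows "{\<omega> \<in> space M. \<not> (\<exists>z. solves_on a B \<omega> t0 t1 x z \<and>
            (\<forall>t\<in>{t0..t1}. z t \<in> {sqrt (a t0) - D .. sqrt (a t) + D}))} \<in> sets M
       \<and> measure M {\<omega> \<in> space M. \<not> (\<exists>z. solves_on a B \<omega> t0 t1 x z \<and>
            (\<forall>t\<in>{t0..t1}. z t \<in> {sqrt (a t0) - D .. sqrt (a t) + D}))}
         \<le> 4 * exp (- (D - d)\<^sup>2 / (2 * (t1 - t0)))"
proof -
  note asm = assms(2-10)
  have \<beta>: "\<beta> > 0" and a0: "a0 > 0" and t0: "0 < t0" and t01: "t0 < t1" and d: "0 < d" "d < D"
    and Ds: "D < sqrt (a t0)" and x: "x \<in> {sqrt (a t0) - d .. sqrt (a t0) + d}" using asm by auto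
  define L where "L = sqrt (a t0) - D"
  define U where "U = sqrt (a t1) + D"
  define T where "T = t1 - t0"
  define r where "r = D - d"
  define bf where "bf \<omega> t = B t \<omega> - B t0 \<omega>" for \<omega> t
  define Zw where "Zw \<omega> = picard.Zs a (bf \<omega>) t0 x L U" for \<omega>
  define band where "band t = {sqrt (a t0) - D .. sqrt (a t) + D}" for t
  define Ev where "Ev = {\<omega> \<in> space M. \<not> (\<exists>z. solves_on a B \<omega> t0 t1 x z \<and>
            (\<forall>t\<in>{t0..t1}. z t \<in> {sqrt (a t0) - D .. sqrt (a t) + D}))}"
  have bfe: "bf \<omega> t = B t \<omega> - B t0 \<omega>" for \<omega> t by (simp add: bf_def)
  have T: "0 < T" using t01 by (simp add: T_def)
  have r: "0 < r" using d by (simp add: r_def)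
  have P: "prob_space M" using BM by (simp add: brownian_motion_def)
  interpret prob_space M by (rule P)
  have Bm: "B t \<in> borel_measurable M" if "0 \<le> t" for t using BM that by (simp add: brownian_motion_def)
  have Bc: "continuous_on {0..} (\<lambda>t. B t \<omega>)" if "\<omega> \<in> space M" for \<omega>
    using BM that by (simp add: brownian_motion_def)
  have amono: "a s \<le> a t" if "s \<le> t" for s t using that \<beta> by (simp add: a_def divide_right_mono)
  have apos: "0 < a t0" using \<beta> a0 t0 by (simp add: a_def add_pos_pos)
  have ca: "continuous_on {t0..t1} a" unfolding a_def by (intro continuous_intros) auto
  have cbf: "continuous_on {t0..t1} (bf \<omega>)" if "\<omega> \<in> space M" for \<omega>
  proof -
    have "continuous_on {t0..t1} (\<lambda>t. B t \<omega>)" by (rule continuous_on_subset[OF Bc[OF that]]) (use t0 in auto)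
    then show ?thesis unfolding bf_def by (intro continuous_intros)
  qed
  have LU: "L \<le> U"
  proof -
    have "sqrt (a t0) \<le> sqrt (a t1)" using amono[of t0 t1] t01 by simp
    then show ?thesis using d unfolding L_def U_def by linarith
  qed
  have pic: "picard a (bf \<omega>) t0 t1 L U" if "\<omega> \<in> space M" for \<omega>
    by unfold_locales (use t01 Ds LU ca cbf[OF that] in \<open>auto simp: L_def\<close>)
  have Ev_eq: "Ev = {\<omega> \<in> space M. \<exists>t\<in>{t0..t1}. Zw \<omega> t \<notin> band t}"
  proof -
    have "(\<exists>z. solves_on a B \<omega> t0 t1 x z \<and> (\<forall>t\<in>{t0..t1}. z t \<in> {sqrt (a t0) - D .. sqrt (a t) + D}))
       \<longleftrightarrow> (\<forall>t\<in>{t0..t1}. Zw \<omega> t \<in> band t)" if "\<omega> \<in> space M" for \<omega>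
      unfolding Zw_def band_def by (rule event_char[OF pic[OF that] _ L_def U_def]) (auto simp: amono bfe)
    then show ?thesis unfolding Ev_def by (intro Collect_cong) blast
  qed
  have bm: "(\<lambda>\<omega>. bf \<omega> t) \<in> borel_measurable M" if "t \<in> {t0..t1}" for t
    unfolding bf_def using that t0 by (intro borel_measurable_diff Bm) auto
  have Zm: "(\<lambda>\<omega>. Zw \<omega> q) \<in> borel_measurable M" if "q \<in> {t0..t1}" for q
    unfolding Zw_def by (rule Zs_meas[OF pic bm that])
  have cZ: "continuous_on {t0..t1} (Zw \<omega>)" if "\<omega> \<in> space M" for \<omega>
    unfolding Zw_def by (rule picard.Zs_cont[OF pic[OF that]])
  define gq where "gq n k = grid t0 t1 (Suc n) k" for n k
  have gqI: "gq n k \<in> {t0..t1}" if "k \<le> Suc n" for n k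
  proof -
    have "real k * (t1 - t0) / real (Suc n) \<le> real (Suc n) * (t1 - t0) / real (Suc n)"
      using that t01 by (intro divide_right_mono mult_right_mono) auto
    then show ?thesis using t01 by (auto simp: gq_def grid_def)
  qed
  have Ev_eq2: "Ev = (\<Union>n. \<Union>k\<in>{..Suc n}. {\<omega> \<in> space M. Zw \<omega> (gq n k) \<notin> band (gq n k)})"
  proof
    show "Ev \<subseteq> (\<Union>n. \<Union>k\<in>{..Suc n}. {\<omega> \<in> space M. Zw \<omega> (gq n k) \<notin> band (gq n k)})"
    proof
      fix \<omega> assume "\<omega> \<in> Ev"
      then obtain t where \<omega>: "\<omega> \<in> space M" and t: "t \<in> {t0..t1}" "Zw \<omega> t \<notin> band t"
        unfolding Ev_eq by auto
      define h where "h s = max (L - Zw \<omega> s) (Zw \<omega> s - (sqrt (a s) + D))" for s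
      have ch: "continuous_on {t0..t1} h" unfolding h_def using cZ[OF \<omega>] ca
        by (intro continuous_intros) auto
      have ht: "0 < h t" using t(2) by (auto simp: h_def band_def L_def)
      obtain \<delta> where \<delta>: "\<delta> > 0" "\<And>s. s \<in> {t0..t1} \<Longrightarrow> dist s t < \<delta> \<Longrightarrow> dist (h s) (h t) < h t"
        using ch t(1) ht unfolding continuous_on_iff by metis
      obtain n :: nat where n: "T / \<delta> < n" using reals_Archimedean2 by blast
      have "T / \<delta> < Suc n" using n by linarith
      then have Tn: "T / Suc n < \<delta>" using \<delta>(1) by (simp add: field_simps)
      let ?k = "kf t0 t1 (Suc n) t"
      note kp = kf_props[OF t01 t(1), of "Suc n", simplified]
      have gk: "gq n ?k \<in> {t0..t1}" using gqI kp by blast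
      have "dist (gq n ?k) t < \<delta>" using kp Tn by (auto simp: gq_def dist_real_def T_def)
      then have "dist (h (gq n ?k)) (h t) < h t" using \<delta>(2)[OF gk] by blast
      then have "0 < h (gq n ?k)" by (auto simp: dist_real_def)
      then have "Zw \<omega> (gq n ?k) \<notin> band (gq n ?k)" by (auto simp: h_def band_def L_def)
      then show "\<omega> \<in> (\<Union>n. \<Union>k\<in>{..Suc n}. {\<omega> \<in> space M. Zw \<omega> (gq n k) \<notin> band (gq n k)})"
        using \<omega> kp by blast
    qed
  next
    show "(\<Union>n. \<Union>k\<in>{..Suc n}. {\<omega> \<in> space M. Zw \<omega> (gq n k) \<notin> band (gq n k)}) \<subseteq> Ev"
      unfolding Ev_eq using gqI by fastforce
  qed
  have each: "{\<omega> \<in> space M. Zw \<omega> q \<notin> band q} \<in> sets M" if "q \<in> {t0..t1}" for q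
  proof -
    have [measurable]: "(\<lambda>\<omega>. Zw \<omega> q) \<in> borel_measurable M" by (rule Zm[OF that])
    have "{\<omega> \<in> space M. Zw \<omega> q \<notin> band q} = {\<omega> \<in> space M. Zw \<omega> q < sqrt (a t0) - D \<or> sqrt (a q) + D < Zw \<omega> q}"
      by (auto simp: band_def)
    also have "\<dots> \<in> sets M" by measurable
    finally show ?thesis .
  qed
  have Ev_sets: "Ev \<in> sets M"
    unfolding Ev_eq2 by (intro sets.countable_UN) (auto intro!: sets.finite_UN each gqI)
  have key: "\<exists>\<sigma> \<tau> sg. sg\<^sup>2 = 1 \<and> t0 \<le> \<sigma> \<and> \<sigma> \<le> \<tau> \<and> \<tau> \<le> t1 \<and> r \<le> sg * (bf \<omega> \<sigma> - bf \<omega> \<tau>)"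
    if "\<omega> \<in> Ev" for \<omega>
  proof -
    from that obtain t where \<omega>: "\<omega> \<in> space M" and t: "t \<in> {t0..t1}" "Zw \<omega> t \<notin> band t"
      unfolding Ev_eq by auto
    have out: "picard.Zs a (bf \<omega>) t0 x L U t \<notin> {L .. sqrt (a t) + D}"
      using t(2) by (simp add: Zw_def band_def L_def)
    have b0: "bf \<omega> t0 = 0" by (simp add: bf_def)
    obtain \<sigma> where \<sigma>: "\<sigma> \<in> {t0..t}" "D - d \<le> bf \<omega> \<sigma> - bf \<omega> t \<or> D - d \<le> bf \<omega> t - bf \<omega> \<sigma>"
      using exit_drawdown[OF pic[OF \<omega>] _ apos L_def U_def d x b0 t(1) out] amono by blast
    show ?thesis
    proof (cases "D - d \<le> bf \<omega> \<sigma> - bf \<omega> t")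
      case True
      then show ?thesis using \<sigma>(1) t(1) by (intro exI[of _ \<sigma>] exI[of _ t] exI[of _ 1]) (auto simp: r_def)
    next
      case False
      then show ?thesis using \<sigma> t(1) by (intro exI[of _ \<sigma>] exI[of _ t] exI[of _ "-1"]) (auto simp: r_def)
    qed
  qed
  have bound_eps: "measure M Ev \<le> 4 * exp (- (r - \<epsilon>)\<^sup>2 / (2 * T))" if \<epsilon>: "0 < \<epsilon>" "\<epsilon> < r" for \<epsilon>
  proof -
    define c where "c = r - \<epsilon>"
    have c: "0 < c" using \<epsilon> by (simp add: c_def)
    define G where "G n sg = {\<omega>\<in>space M. hit sg c (\<lambda>i. B (grid t0 t1 n (Suc i)) \<omega> - B (grid t0 t1 n i) \<omega>) n}" for n sg
    have Gp: "G n sg \<in> sets M \<and> measure M (G n sg) \<le> 2 * exp (- c\<^sup>2 / (2 * T))" if "0 < n" "sg\<^sup>2 = 1" for n sg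
      unfolding G_def T_def by (rule grid_prob[OF BM _ t01 that c]) (use t0 in simp)
    define H where "H k = (\<Inter>n\<in>{Suc k..}. G n 1 \<union> G n (-1))" for k
    have Hs: "H k \<in> sets M" for k
      unfolding H_def using Gp by (intro sets.countable_INT') auto
    have Hmono: "incseq H" unfolding incseq_def H_def by auto
    have Hb: "measure M (H k) \<le> 4 * exp (- c\<^sup>2 / (2 * T))" for k
    proof -
      have "H k \<subseteq> G (Suc k) 1 \<union> G (Suc k) (-1)" unfolding H_def by auto
      then have "measure M (H k) \<le> measure M (G (Suc k) 1 \<union> G (Suc k) (-1))"
        using Gp[of "Suc k" 1] Gp[of "Suc k" "-1"] by (intro finite_measure_mono) auto
      also have "\<dots> \<le> measure M (G (Suc k) 1) + measure M (G (Suc k) (-1))"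
        using Gp[of "Suc k" 1] Gp[of "Suc k" "-1"] by (intro measure_Un_le) auto
      also have "\<dots> \<le> 4 * exp (- c\<^sup>2 / (2 * T))"
        using Gp[of "Suc k" 1] Gp[of "Suc k" "-1"] by auto
      finally show ?thesis .
    qed
    have EvH: "Ev \<subseteq> (\<Union>k. H k)"
    proof
      fix \<omega> assume \<omega>E: "\<omega> \<in> Ev"
      then have \<omega>: "\<omega> \<in> space M" unfolding Ev_def by auto
      obtain \<sigma> \<tau> sg where st: "sg\<^sup>2 = 1" "t0 \<le> \<sigma>" "\<sigma> \<le> \<tau>" "\<tau> \<le> t1" "r \<le> sg * (bf \<omega> \<sigma> - bf \<omega> \<tau>)"
        using key[OF \<omega>E] by blast
      obtain N0 where N0: "\<forall>n\<ge>N0. 0 < n \<longrightarrow> hit sg (r - \<epsilon>) (\<lambda>i. bf \<omega> (grid t0 t1 n (Suc i)) - bf \<omega> (grid t0 t1 n i)) n"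
        using grid_hit[OF t01 cbf[OF \<omega>] st(1) st(2-5) \<epsilon>(1)] by blast
      have "\<omega> \<in> G n sg" if "Suc N0 \<le> n" for n
      proof -
        have "hit sg (r - \<epsilon>) (\<lambda>i. bf \<omega> (grid t0 t1 n (Suc i)) - bf \<omega> (grid t0 t1 n i)) n"
          using N0 that by auto
        moreover have "(\<lambda>i. bf \<omega> (grid t0 t1 n (Suc i)) - bf \<omega> (grid t0 t1 n i)) =
            (\<lambda>i. B (grid t0 t1 n (Suc i)) \<omega> - B (grid t0 t1 n i) \<omega>)"
          by (simp add: bf_def)
        ultimately show ?thesis using \<omega> by (simp add: G_def c_def)
      qed
      moreover have "sg = 1 \<or> sg = -1" using st(1) by (simp add: power2_eq_1_iff)
      ultimately have "\<omega> \<in> H N0" unfolding H_def by auto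
      then show "\<omega> \<in> (\<Union>k. H k)" by blast
    qed
    have lim: "(\<lambda>k. measure M (H k)) \<longlonglongrightarrow> measure M (\<Union>k. H k)"
      by (rule finite_Lim_measure_incseq) (use Hs Hmono in auto)
    have "measure M (\<Union>k. H k) \<le> 4 * exp (- c\<^sup>2 / (2 * T))"
      by (rule LIMSEQ_le_const2[OF lim]) (use Hb in auto)
    moreover have "measure M Ev \<le> measure M (\<Union>k. H k)"
      by (rule finite_measure_mono[OF EvH]) (use Hs in auto)
    ultimately show ?thesis by (simp add: c_def)
  qed
  have lim0: "(\<lambda>k. r / real (Suc (Suc k))) \<longlonglongrightarrow> 0"
  proof -
    have "(\<lambda>n. r / real n) \<longlonglongrightarrow> 0" by (rule lim_const_over_n)
    then show ?thesis using LIMSEQ_Suc[OF LIMSEQ_Suc] by blast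
  qed
  have lim: "(\<lambda>k. 4 * exp (- (r - r / real (Suc (Suc k)))\<^sup>2 / (2 * T))) \<longlonglongrightarrow> 4 * exp (- (r - 0)\<^sup>2 / (2 * T))"
    using T by (intro tendsto_intros lim0) auto
  have "measure M Ev \<le> 4 * exp (- (r - 0)\<^sup>2 / (2 * T))"
  proof (rule LIMSEQ_le_const[OF lim], intro exI allI impI)
    fix k :: nat
    have "0 < r / real (Suc (Suc k))" using r by simp
    moreover have "r / real (Suc (Suc k)) < r"
    proof -
      have "r / real (Suc (Suc k)) < r / 1" using r by (intro divide_strict_left_mono) auto
      then show ?thesis by simp
    qed
    ultimately show "measure M Ev \<le> 4 * exp (- (r - r / real (Suc (Suc k)))\<^sup>2 / (2 * T))"
      by (rule bound_eps)
  qed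
  then show ?thesis using Ev_sets unfolding Ev_def r_def T_def by simp
qed


end
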